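(* Let $(\mathcal M,g)$ be a semi-Riemannian manifold with Levi-Civita connection $\nabla$, let $\eta,\zeta\in\mathfrak X(\mathcal M)$ be arbitrary, $\mathcal K=\mathcal L_\eta g$, $\Sigma=\mathcal L_\eta\nabla$, $\zeta^\flat=g(\zeta,\cdot)$ and $(k^{(\zeta)})^\mu=\mathcal K^\mu{}_\beta\zeta^\beta$. Then $$\zeta^\alpha\Sigma_{\alpha\beta\mu}=\nabla_{(\beta}(\mathcal L_\eta\zeta^\flat)_{\mu)}-\tfrac12(\mathcal L_\eta\mathcal L_\zeta g)_{\beta\mu}$$ and $$\zeta^\alpha\Sigma_{\alpha\beta\mu}=\tfrac12(\mathcal L_{k^{(\zeta)}}g)_{\beta\mu}-\tfrac12(\mathcal L_\zeta\mathcal K)_{\beta\mu}.$$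
   Context: $\Sigma=\mathcal L_\eta\nabla$ is the $(1,2)$-tensor $\Sigma(V,W)=\mathcal L_\eta(\nabla_VW)-\nabla_{\mathcal L_\eta V}W-\nabla_V(\mathcal L_\eta W)$, and $\Sigma_{\alpha\beta\mu}=g_{\alpha\rho}\Sigma^\rho{}_{\beta\mu}$; equivalently $\Sigma_{\alpha\beta\mu}=\frac12(\nabla_\beta\mathcal K_{\alpha\mu}+\nabla_\mu\mathcal K_{\alpha\beta}-\nabla_\alpha\mathcal K_{\beta\mu})$. Index brackets denote symmetrization with weight $\frac12$. *)

theory Defs
  imports "HOL-Analysis.Analysis"
begin

text \<open>Local-coordinate model: a chart domain U (open subset of R^n, n = CARD('n)),
  tensor fields given by their components in the coordinate frame e_i = axis i 1.\<close>

type_synonym 'n vfield = "real^'n \<Rightarrow> real^'n"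
type_synonym 'n form1 = "real^'n \<Rightarrow> real^'n"
type_synonym 'n tens2 = "real^'n \<Rightarrow> real^'n^'n"

definition pd :: "'n::finite \<Rightarrow> (real^'n \<Rightarrow> real) \<Rightarrow> real^'n \<Rightarrow> real" where
  "pd i f x = deriv (\<lambda>t. f (x + t *\<^sub>R axis i 1)) 0"

fun ipd :: "'n::finite list \<Rightarrow> (real^'n \<Rightarrow> real) \<Rightarrow> real^'n \<Rightarrow> real" where
  "ipd [] f = f"
| "ipd (i # is) f = pd i (ipd is f)"

definition smooth_fun :: "(real^'n::finite) set \<Rightarrow> (real^'n \<Rightarrow> real) \<Rightarrow> bool" where
  "smooth_fun U f \<longleftrightarrow> (\<forall>is. ipd is f differentiable_on U)"

definition smooth_vf :: "(real^'n::finite) set \<Rightarrow> 'n vfield \<Rightarrow> bool" where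
  "smooth_vf U X \<longleftrightarrow> (\<forall>k. smooth_fun U (\<lambda>x. X x $ k))"

definition smooth_t2 :: "(real^'n::finite) set \<Rightarrow> 'n tens2 \<Rightarrow> bool" where
  "smooth_t2 U T \<longleftrightarrow> (\<forall>a b. smooth_fun U (\<lambda>x. T x $ a $ b))"

definition semi_riemannian :: "(real^'n::finite) set \<Rightarrow> 'n tens2 \<Rightarrow> bool" where
  "semi_riemannian U g \<longleftrightarrow> open U \<and> smooth_t2 U g \<and>
     (\<forall>x\<in>U. transpose (g x) = g x \<and> det (g x) \<noteq> 0)"

definition ginv :: "'n::finite tens2 \<Rightarrow> 'n tens2" where
  "ginv g x = matrix_inv (g x)"

definition dvf :: "'n::finite vfield \<Rightarrow> 'n vfield \<Rightarrow> 'n vfield" where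
  "dvf X Y x = (\<chi> k. \<Sum>i\<in>UNIV. X x $ i * pd i (\<lambda>y. Y y $ k) x)"

definition lie_vf :: "'n::finite vfield \<Rightarrow> 'n vfield \<Rightarrow> 'n vfield" where
  "lie_vf X Y x = dvf X Y x - dvf Y X x"

definition christoffel :: "'n::finite tens2 \<Rightarrow> real^'n \<Rightarrow> 'n \<Rightarrow> 'n \<Rightarrow> 'n \<Rightarrow> real" where
  "christoffel g x k i j = (\<Sum>l\<in>UNIV. ginv g x $ k $ l *
      (pd i (\<lambda>y. g y $ l $ j) x + pd j (\<lambda>y. g y $ l $ i) x - pd l (\<lambda>y. g y $ i $ j) x)) / 2"

definition lc_nabla :: "'n::finite tens2 \<Rightarrow> 'n vfield \<Rightarrow> 'n vfield \<Rightarrow> 'n vfield" where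
  "lc_nabla g X Y x = dvf X Y x +
     (\<chi> k. \<Sum>i\<in>UNIV. \<Sum>j\<in>UNIV. christoffel g x k i j * X x $ i * Y x $ j)"

definition lie_t2 :: "'n::finite vfield \<Rightarrow> 'n tens2 \<Rightarrow> 'n tens2" where
  "lie_t2 X T x = (\<chi> a b. (\<Sum>c\<in>UNIV. X x $ c * pd c (\<lambda>y. T y $ a $ b) x)
      + (\<Sum>c\<in>UNIV. T x $ c $ b * pd a (\<lambda>y. X y $ c) x)
      + (\<Sum>c\<in>UNIV. T x $ a $ c * pd b (\<lambda>y. X y $ c) x))"

definition lie_form :: "'n::finite vfield \<Rightarrow> 'n form1 \<Rightarrow> 'n form1" where
  "lie_form X w x = (\<chi> a. (\<Sum>c\<in>UNIV. X x $ c * pd c (\<lambda>y. w y $ a) x)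
      + (\<Sum>c\<in>UNIV. w x $ c * pd a (\<lambda>y. X y $ c) x))"

definition flat :: "'n::finite tens2 \<Rightarrow> 'n vfield \<Rightarrow> 'n form1" where
  "flat g Z x = (\<chi> a. \<Sum>b\<in>UNIV. g x $ a $ b * Z x $ b)"

text \<open>Covariant derivative of a 1-form: (nabla_b w)_m.\<close>
definition nabla_form :: "'n::finite tens2 \<Rightarrow> 'n form1 \<Rightarrow> real^'n \<Rightarrow> 'n \<Rightarrow> 'n \<Rightarrow> real" where
  "nabla_form g w x b m = pd b (\<lambda>y. w y $ m) x
      - (\<Sum>r\<in>UNIV. christoffel g x r b m * w x $ r)"

definition coord_vf :: "'n::finite \<Rightarrow> 'n vfield" where
  "coord_vf i x = axis i 1"

text \<open>Sigma = L_eta nabla as (1,2)-tensor: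
  Sigma(V,W) = L_eta(nabla_V W) - nabla_{L_eta V} W - nabla_V (L_eta W).\<close>
definition Sigma_op :: "'n::finite tens2 \<Rightarrow> 'n vfield \<Rightarrow> 'n vfield \<Rightarrow> 'n vfield \<Rightarrow> 'n vfield" where
  "Sigma_op g eta V W = (\<lambda>x. lie_vf eta (lc_nabla g V W) x
      - lc_nabla g (lie_vf eta V) W x - lc_nabla g V (lie_vf eta W) x)"

definition Sigma_up :: "'n::finite tens2 \<Rightarrow> 'n vfield \<Rightarrow> real^'n \<Rightarrow> 'n \<Rightarrow> 'n \<Rightarrow> 'n \<Rightarrow> real" where
  "Sigma_up g eta x r b m = Sigma_op g eta (coord_vf b) (coord_vf m) x $ r"

definition Sigma_low :: "'n::finite tens2 \<Rightarrow> 'n vfield \<Rightarrow> real^'n \<Rightarrow> 'n \<Rightarrow> 'n \<Rightarrow> 'n \<Rightarrow> real" where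
  "Sigma_low g eta x a b m = (\<Sum>r\<in>UNIV. g x $ a $ r * Sigma_up g eta x r b m)"

definition kzeta :: "'n::finite tens2 \<Rightarrow> 'n vfield \<Rightarrow> 'n vfield \<Rightarrow> 'n vfield" where
  "kzeta g eta Z x = (\<chi> m. \<Sum>a\<in>UNIV. \<Sum>b\<in>UNIV.
      ginv g x $ m $ a * lie_t2 eta g x $ a $ b * Z x $ b)"

end

theory Submission
  imports Defs
begin

definition HD :: "'n::finite \<Rightarrow> (real^'n \<Rightarrow> real) \<Rightarrow> real^'n \<Rightarrow> real \<Rightarrow> bool" where
  "HD i f y d \<longleftrightarrow> ((\<lambda>t. f (y + t *\<^sub>R axis i 1)) has_real_derivative d) (at 0)"

lemma HD_pd: "HD i f y d \<Longrightarrow> pd i f y = d"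
  unfolding HD_def pd_def by (rule DERIV_imp_deriv)

lemma HD_eq: "HD i f y d \<Longrightarrow> d = d' \<Longrightarrow> HD i f y d'"
  by simp

lemma HD_const: "HD i (\<lambda>y. c) y 0"
  unfolding HD_def by simp

lemma HD_add: "HD i f y a \<Longrightarrow> HD i h y b \<Longrightarrow> HD i (\<lambda>y. f y + h y) y (a + b)"
  unfolding HD_def by (rule DERIV_add)

lemma HD_diff: "HD i f y a \<Longrightarrow> HD i h y b \<Longrightarrow> HD i (\<lambda>y. f y - h y) y (a - b)"
  unfolding HD_def by (rule DERIV_diff)

lemma HD_minus: "HD i f y a \<Longrightarrow> HD i (\<lambda>y. - f y) y (- a)"
  unfolding HD_def by (rule DERIV_minus)

lemma HD_mult: "HD i f y a \<Longrightarrow> HD i h y b \<Longrightarrow> HD i (\<lambda>y. f y * h y) y (f y * b + a * h y)"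
  unfolding HD_def using DERIV_mult'[of "\<lambda>t. f (y + t *\<^sub>R axis i 1)" a 0 UNIV "\<lambda>t. h (y + t *\<^sub>R axis i 1)" b]
  by simp

lemma HD_divc: "HD i f y a \<Longrightarrow> HD i (\<lambda>y. f y / c) y (a / c)"
  unfolding HD_def by (rule DERIV_cdivide)

lemma HD_sum: "(\<And>j. HD i (f j) y (d j)) \<Longrightarrow> HD i (\<lambda>y. \<Sum>j\<in>UNIV. f j y) y (\<Sum>j\<in>UNIV. d j)"
  unfolding HD_def by (rule DERIV_sum) auto

lemma line_deriv:
  fixes f :: "real^'n::finite \<Rightarrow> real"
  assumes "(f has_derivative f') (at (p + s *\<^sub>R v))"
  shows "((\<lambda>t. f (p + t *\<^sub>R v)) has_real_derivative f' v) (at s)"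
proof -
  have l: "((\<lambda>t. p + t *\<^sub>R v) has_derivative (\<lambda>h. h *\<^sub>R v)) (at s)"
    by (auto intro!: derivative_eq_intros)
  have "((f \<circ> (\<lambda>t. p + t *\<^sub>R v)) has_derivative (f' \<circ> (\<lambda>h. h *\<^sub>R v))) (at s)"
    by (rule diff_chain_at[OF l]) (use assms in simp)
  moreover have "linear f'" using assms has_derivative_linear by blast
  ultimately show ?thesis
    unfolding has_field_derivative_def o_def
    by (simp add: linear_cmul mult.commute[of _ "f' v"])
qed

lemma pd_frechet:
  fixes f :: "real^'n::finite \<Rightarrow> real"
  assumes "(f has_derivative f') (at q)"
  shows "pd i f q = f' (axis i 1)"
  using line_deriv[of f f' q 0 "axis i 1"] assms
  by (intro HD_pd) (simp add: HD_def)

lemma HD_at: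
  fixes f :: "real^'n::finite \<Rightarrow> real"
  assumes "f differentiable (at q)"
  shows "HD i f q (pd i f q)"
proof -
  obtain f' where f': "(f has_derivative f') (at q)" using assms unfolding differentiable_def by blast
  show ?thesis using line_deriv[of f f' q 0 "axis i 1"] f' pd_frechet[OF f', of i]
    by (simp add: HD_def)
qed

lemma line_pd:
  fixes f :: "real^'n::finite \<Rightarrow> real"
  assumes "f differentiable (at (p + s *\<^sub>R axis i 1))"
  shows "((\<lambda>t. f (p + t *\<^sub>R axis i 1)) has_real_derivative pd i f (p + s *\<^sub>R axis i 1)) (at s)"
proof -
  obtain f' where f': "(f has_derivative f') (at (p + s *\<^sub>R axis i 1))"
    using assms unfolding differentiable_def by blast
  show ?thesis using line_deriv[OF f'] pd_frechet[OF f', of i] by simp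
qed

lemma line_eventually:
  fixes U :: "(real^'n::finite) set"
  assumes "open U" "y \<in> U"
  shows "eventually (\<lambda>t. y + t *\<^sub>R axis i 1 \<in> U) (nhds (0::real))"
proof -
  have "open ((\<lambda>t::real. y + t *\<^sub>R axis i 1) -` U)"
    by (rule open_vimage[OF assms(1)]) (intro continuous_intros)
  from eventually_nhds_in_open[OF this] show ?thesis using assms(2) by simp
qed

lemma HD_local:
  fixes U :: "(real^'n::finite) set"
  assumes "open U" "y \<in> U" "\<And>z. z \<in> U \<Longrightarrow> f z = h z" "HD i h y d"
  shows "HD i f y d"
proof -
  have ev: "eventually (\<lambda>t. f (y + t *\<^sub>R axis i 1) = h (y + t *\<^sub>R axis i 1)) (nhds (0::real))"
    using line_eventually[OF assms(1,2), of i] by (rule eventually_mono) (simp add: assms(3))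
  show ?thesis using assms(4) unfolding HD_def
    using DERIV_cong_ev[OF refl ev refl] by simp
qed

lemma pd_local:
  fixes U :: "(real^'n::finite) set"
  assumes "open U" "y \<in> U" "\<And>z. z \<in> U \<Longrightarrow> f z = h z"
  shows "pd i f y = pd i h y"
proof -
  have ev: "eventually (\<lambda>t. f (y + t *\<^sub>R axis i 1) = h (y + t *\<^sub>R axis i 1)) (nhds (0::real))"
    using line_eventually[OF assms(1,2), of i] by (rule eventually_mono) (simp add: assms(3))
  show ?thesis unfolding pd_def by (rule deriv_cong_ev[OF ev refl])
qed

lemma smooth_diff0: "smooth_fun U f \<Longrightarrow> open U \<Longrightarrow> y \<in> U \<Longrightarrow> f differentiable (at y)"
  unfolding smooth_fun_def
  by (metis differentiable_on_eq_differentiable_at ipd.simps(1))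

lemma smooth_diff1: "smooth_fun U f \<Longrightarrow> open U \<Longrightarrow> y \<in> U \<Longrightarrow> pd i f differentiable (at y)"
  unfolding smooth_fun_def
  by (metis differentiable_on_eq_differentiable_at ipd.simps)

lemma smooth_diff2: "smooth_fun U f \<Longrightarrow> open U \<Longrightarrow> y \<in> U \<Longrightarrow> pd i (pd j f) differentiable (at y)"
  unfolding smooth_fun_def
  by (metis differentiable_on_eq_differentiable_at ipd.simps)


lemma dist_2ax:
  fixes x :: "real^'n::finite"
  shows "dist (x + a *\<^sub>R axis i 1 + b *\<^sub>R axis j 1) x \<le> \<bar>a\<bar> + \<bar>b\<bar>"
proof -
  have "dist (x + a *\<^sub>R axis i 1 + b *\<^sub>R axis j 1) x = norm (a *\<^sub>R axis i (1::real) + b *\<^sub>R axis j 1)"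
    by (simp add: dist_norm algebra_simps)
  also have "\<dots> \<le> norm (a *\<^sub>R axis i (1::real)) + norm (b *\<^sub>R axis j (1::real))"
    by (rule norm_triangle_ineq)
  finally show ?thesis by simp
qed

lemma mixed_mvt:
  fixes f :: "real^'n::finite \<Rightarrow> real"
  assumes h: "h > 0" and sub: "cball x (2*h) \<subseteq> U"
    and df: "\<And>y. y \<in> U \<Longrightarrow> f differentiable (at y)"
    and dfi: "\<And>y. y \<in> U \<Longrightarrow> pd i f differentiable (at y)"
  shows "\<exists>q. dist q x \<le> 2*h \<and>
    f (x + h *\<^sub>R axis j 1 + h *\<^sub>R axis i 1) - f (x + h *\<^sub>R axis i 1) - f (x + h *\<^sub>R axis j 1) + f x
      = h * h * pd j (pd i f) q"
proof -
  let ?u = "axis i (1::real)" and ?v = "axis j (1::real)"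
  have inU: "x + a *\<^sub>R ?v + b *\<^sub>R ?u \<in> U" if "0 \<le> a" "a \<le> h" "0 \<le> b" "b \<le> h" for a b
  proof -
    have "dist (x + a *\<^sub>R ?v + b *\<^sub>R ?u) x \<le> \<bar>a\<bar> + \<bar>b\<bar>" by (rule dist_2ax)
    then have "x + a *\<^sub>R ?v + b *\<^sub>R ?u \<in> cball x (2*h)" using that by (simp add: dist_commute)
    then show ?thesis using sub by blast
  qed
  define A where "A s = f (x + h *\<^sub>R ?v + s *\<^sub>R ?u) - f (x + s *\<^sub>R ?u)" for s
  have dA: "(A has_real_derivative (pd i f (x + h *\<^sub>R ?v + s *\<^sub>R ?u) - pd i f (x + s *\<^sub>R ?u))) (at s)"
    if "0 \<le> s" "s \<le> h" for s
  proof -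
    have "f differentiable (at (x + h *\<^sub>R ?v + s *\<^sub>R ?u))" using inU[of h s] that h by (intro df) auto
    from line_pd[OF this] have 1: "((\<lambda>t. f (x + h *\<^sub>R ?v + t *\<^sub>R ?u)) has_real_derivative pd i f (x + h *\<^sub>R ?v + s *\<^sub>R ?u)) (at s)" .
    have "f differentiable (at (x + s *\<^sub>R ?u))" using inU[of 0 s] that h by (intro df) auto
    from line_pd[OF this] have 2: "((\<lambda>t. f (x + t *\<^sub>R ?u)) has_real_derivative pd i f (x + s *\<^sub>R ?u)) (at s)" .
    show ?thesis unfolding A_def by (rule DERIV_diff[OF 1 2])
  qed
  have "continuous_on {0..h} A"
    by (rule continuous_at_imp_continuous_on) (use dA DERIV_isCont in force)
  moreover have "A differentiable (at s)" if "0 < s" "s < h" for s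
    using dA[of s] that real_differentiable_def by auto
  ultimately obtain l \<sigma> where s: "0 < \<sigma>" "\<sigma> < h" and dl: "DERIV A \<sigma> :> l" and eq1: "A h - A 0 = (h - 0) * l"
    using MVT[OF h] by blast
  have l: "l = pd i f (x + h *\<^sub>R ?v + \<sigma> *\<^sub>R ?u) - pd i f (x + \<sigma> *\<^sub>R ?u)"
    using DERIV_unique[OF dl dA[of \<sigma>]] s by simp
  define B where "B t = pd i f (x + \<sigma> *\<^sub>R ?u + t *\<^sub>R ?v)" for t
  have dB: "(B has_real_derivative pd j (pd i f) (x + \<sigma> *\<^sub>R ?u + t *\<^sub>R ?v)) (at t)"
    if "0 \<le> t" "t \<le> h" for t
  proof -
    have e: "x + \<sigma> *\<^sub>R ?u + t *\<^sub>R ?v = x + t *\<^sub>R ?v + \<sigma> *\<^sub>R ?u" by (simp add: algebra_simps)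
    have "pd i f differentiable (at (x + \<sigma> *\<^sub>R ?u + t *\<^sub>R ?v))"
      unfolding e using inU[of t \<sigma>] that s by (intro dfi) auto
    from line_pd[OF this] show ?thesis unfolding B_def .
  qed
  have "continuous_on {0..h} B"
    by (rule continuous_at_imp_continuous_on) (use dB DERIV_isCont in force)
  moreover have "B differentiable (at t)" if "0 < t" "t < h" for t
    using dB[of t] that real_differentiable_def by auto
  ultimately obtain l2 \<tau> where t: "0 < \<tau>" "\<tau> < h" and dl2: "DERIV B \<tau> :> l2" and eq2: "B h - B 0 = (h - 0) * l2"
    using MVT[OF h] by blast
  have l2: "l2 = pd j (pd i f) (x + \<sigma> *\<^sub>R ?u + \<tau> *\<^sub>R ?v)"
    using DERIV_unique[OF dl2 dB[of \<tau>]] t by simp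
  have "B h - B 0 = l" unfolding B_def l by (simp add: algebra_simps)
  then have "A h - A 0 = h * (h * pd j (pd i f) (x + \<sigma> *\<^sub>R ?u + \<tau> *\<^sub>R ?v))"
    using eq1 eq2 l2 by simp
  moreover have "dist (x + \<sigma> *\<^sub>R ?u + \<tau> *\<^sub>R ?v) x \<le> 2*h"
    using dist_2ax[of x \<sigma> i \<tau> j] s t by simp
  ultimately show ?thesis unfolding A_def
    by (intro exI[of _ "x + \<sigma> *\<^sub>R ?u + \<tau> *\<^sub>R ?v"]) (simp add: algebra_simps)
qed

lemma schwarz:
  fixes f :: "real^'n::finite \<Rightarrow> real"
  assumes U: "open U" "x \<in> U"
    and df: "\<And>y. y \<in> U \<Longrightarrow> f differentiable (at y)"
    and dfi: "\<And>y. y \<in> U \<Longrightarrow> pd i f differentiable (at y)"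
    and dfj: "\<And>y. y \<in> U \<Longrightarrow> pd j f differentiable (at y)"
    and c1: "continuous (at x) (pd j (pd i f))"
    and c2: "continuous (at x) (pd i (pd j f))"
  shows "pd j (pd i f) x = pd i (pd j f) x"
proof (rule ccontr)
  assume ne: "pd j (pd i f) x \<noteq> pd i (pd j f) x"
  define e where "e = \<bar>pd j (pd i f) x - pd i (pd j f) x\<bar> / 2"
  have e: "e > 0" using ne by (simp add: e_def)
  obtain d1 where d1: "d1 > 0" "\<And>q. dist q x < d1 \<Longrightarrow> dist (pd j (pd i f) q) (pd j (pd i f) x) < e"
    using c1[unfolded continuous_at_eps_delta, rule_format, OF e] by auto
  obtain d2 where d2: "d2 > 0" "\<And>q. dist q x < d2 \<Longrightarrow> dist (pd i (pd j f) q) (pd i (pd j f) x) < e"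
    using c2[unfolded continuous_at_eps_delta, rule_format, OF e] by auto
  obtain r where r: "r > 0" "cball x r \<subseteq> U" using U open_contains_cball by blast
  define h where "h = min (min d1 d2) r / 4"
  have h: "h > 0" using d1 d2 r by (simp add: h_def)
  have "2*h \<le> r" using r d1 d2 by (simp add: h_def min_def)
  then have sub: "cball x (2*h) \<subseteq> U" using r(2) subset_cball[of "2*h" r x] by blast
  obtain q1 where q1: "dist q1 x \<le> 2*h"
    "f (x + h *\<^sub>R axis j 1 + h *\<^sub>R axis i 1) - f (x + h *\<^sub>R axis i 1) - f (x + h *\<^sub>R axis j 1) + f x
      = h * h * pd j (pd i f) q1"
    using mixed_mvt[OF h sub df dfi] by blast
  obtain q2 where q2: "dist q2 x \<le> 2*h"
    "f (x + h *\<^sub>R axis i 1 + h *\<^sub>R axis j 1) - f (x + h *\<^sub>R axis j 1) - f (x + h *\<^sub>R axis i 1) + f x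
      = h * h * pd i (pd j f) q2"
    using mixed_mvt[OF h sub df dfj] by blast
  have "h * h * pd j (pd i f) q1 = h * h * pd i (pd j f) q2"
    using q1(2) q2(2) by (simp add: algebra_simps)
  then have eq: "pd j (pd i f) q1 = pd i (pd j f) q2" using h by simp
  have "dist q1 x < d1" "dist q2 x < d2" using q1(1) q2(1) h_def d1 d2 r by (auto simp: min_def split: if_splits)
  then have "\<bar>pd j (pd i f) q1 - pd j (pd i f) x\<bar> < e" "\<bar>pd i (pd j f) q2 - pd i (pd j f) x\<bar> < e"
    using d1 d2 by (auto simp: dist_real_def)
  then show False using eq e_def by (auto simp: abs_if split: if_splits)
qed

lemma smooth_schwarz:
  assumes "smooth_fun U f" "open U" "x \<in> U"
  shows "pd j (pd i f) x = pd i (pd j f) x"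
proof (rule schwarz[OF assms(2,3)])
  show "continuous (at x) (pd j (pd i f))" "continuous (at x) (pd i (pd j f))"
    using smooth_diff2[OF assms] differentiable_imp_continuous_within by blast+
qed (use smooth_diff0[OF assms(1,2)] smooth_diff1[OF assms(1,2)] in auto)

definition HDx :: "'n::finite \<Rightarrow> (real^'n \<Rightarrow> real) \<Rightarrow> real^'n \<Rightarrow> bool" where
  "HDx i f y \<longleftrightarrow> (\<exists>d. HD i f y d)"

lemma HDx_const: "HDx i (\<lambda>y. c) y"
  unfolding HDx_def using HD_const by blast

lemma HDx_mult: "HDx i f y \<Longrightarrow> HDx i h y \<Longrightarrow> HDx i (\<lambda>y. f y * h y) y"
  unfolding HDx_def using HD_mult by blast

lemma HDx_divide: "HDx i f y \<Longrightarrow> HDx i h y \<Longrightarrow> h y \<noteq> 0 \<Longrightarrow> HDx i (\<lambda>y. f y / h y) y"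
  unfolding HDx_def HD_def using DERIV_divide by fastforce

lemma HDx_sum_set: "finite S \<Longrightarrow> (\<And>j. j \<in> S \<Longrightarrow> HDx i (f j) y) \<Longrightarrow> HDx i (\<lambda>y. \<Sum>j\<in>S. f j y) y"
proof (induction S rule: finite_induct)
  case empty
  then show ?case using HDx_const[of i 0 y] by simp
next
  case (insert a F)
  then have "HDx i (\<lambda>y. f a y + (\<Sum>j\<in>F. f j y)) y"
    unfolding HDx_def using HD_add by blast
  then show ?case using insert by simp
qed

lemma HDx_prod_set: "finite S \<Longrightarrow> (\<And>j. j \<in> S \<Longrightarrow> HDx i (f j) y) \<Longrightarrow> HDx i (\<lambda>y. \<Prod>j\<in>S. f j y) y"
proof (induction S rule: finite_induct)
  case empty
  then show ?case using HDx_const[of i 1 y] by simp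
next
  case (insert a F)
  then have "HDx i (\<lambda>y. f a y * (\<Prod>j\<in>F. f j y)) y"
    by (intro HDx_mult) auto
  then show ?case using insert by simp
qed

lemma HDx_det:
  fixes A :: "real^'n::finite \<Rightarrow> real^'n^'n"
  assumes "\<And>a b. HDx i (\<lambda>y. A y $ a $ b) x"
  shows "HDx i (\<lambda>y. det (A y)) x"
  unfolding det_def
  by (intro HDx_sum_set HDx_mult HDx_const HDx_prod_set assms) (auto simp: finite_permutations)

lemma inv_facts:
  fixes A :: "real^'n::finite^'n"
  assumes "det A \<noteq> 0"
  shows "A ** matrix_inv A = mat 1" "matrix_inv A ** A = mat 1"
proof -
  have "invertible A" using assms invertible_det_nz by blast
  then have "\<exists>A'. A ** A' = mat 1 \<and> A' ** A = mat 1" unfolding invertible_def by blast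
  from someI_ex[OF this] show "A ** matrix_inv A = mat 1" "matrix_inv A ** A = mat 1"
    unfolding matrix_inv_def by blast+
qed

lemma inv_entry_cramer:
  fixes A :: "real^'n::finite^'n"
  assumes "det A \<noteq> 0"
  shows "matrix_inv A $ k $ l = det (\<chi> r s. if s = k then axis l 1 $ r else A $ r $ s) / det A"
proof -
  have "A *v (matrix_inv A *v axis l 1) = axis l 1"
    by (simp add: matrix_vector_mul_assoc inv_facts[OF assms])
  from iffD1[OF cramer[OF assms] this]
  have "matrix_inv A *v axis l 1 = (\<chi> k. det (\<chi> i j. if j = k then axis l 1 $ i else A $ i $ j) / det A)" .
  then have "(matrix_inv A *v axis l 1) $ k = det (\<chi> r s. if s = k then axis l 1 $ r else A $ r $ s) / det A"
    by simp
  moreover have "(matrix_inv A *v axis l 1) $ k = matrix_inv A $ k $ l"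
    by (simp add: matrix_vector_mult_def axis_def if_distrib cong: if_cong)
  ultimately show ?thesis by simp
qed

definition S1 :: "('n::finite \<Rightarrow> real) \<Rightarrow> real" where "S1 f = (\<Sum>a\<in>UNIV. f a)"

lemma S1_cong: "(\<And>a. f a = h a) \<Longrightarrow> S1 f = S1 h" by (simp add: S1_def)

definition S2 :: "('n::finite \<Rightarrow> 'n::finite \<Rightarrow> real) \<Rightarrow> real" where "S2 f = (\<Sum>a\<in>UNIV. (\<Sum>b\<in>UNIV. f a b))"

lemma S2_cong: "(\<And>a b. f a b = h a b) \<Longrightarrow> S2 f = S2 h" by (simp add: S2_def)

lemma S2_sw0: "S2 f = S2 (\<lambda>a b. f b a)" by (simp only: S2_def) (rule sum.swap)

lemma S2_p10: "S2 f = S2 (\<lambda>a b. f b a)"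
proof -
  have "S2 f = S2 (\<lambda>a b. f b a)" by (rule S2_sw0)
  then show ?thesis .
qed

definition S3 :: "('n::finite \<Rightarrow> 'n::finite \<Rightarrow> 'n::finite \<Rightarrow> real) \<Rightarrow> real" where "S3 f = (\<Sum>a\<in>UNIV. (\<Sum>b\<in>UNIV. (\<Sum>c\<in>UNIV. f a b c)))"

lemma S3_cong: "(\<And>a b c. f a b c = h a b c) \<Longrightarrow> S3 f = S3 h" by (simp add: S3_def)

lemma S3_sw0: "S3 f = S3 (\<lambda>a b c. f b a c)" by (simp only: S3_def) (rule sum.swap)

lemma S3_sw1: "S3 f = S3 (\<lambda>a b c. f a c b)" by (simp only: S3_def) (rule sum.cong[OF refl], rule sum.swap)

lemma S3_p102: "S3 f = S3 (\<lambda>a b c. f b a c)"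
proof -
  have "S3 f = S3 (\<lambda>a b c. f b a c)" by (rule S3_sw0)
  then show ?thesis .
qed

lemma S3_p021: "S3 f = S3 (\<lambda>a b c. f a c b)"
proof -
  have "S3 f = S3 (\<lambda>a b c. f a c b)" by (rule S3_sw1)
  then show ?thesis .
qed

lemma S3_p201: "S3 f = S3 (\<lambda>a b c. f c a b)"
proof -
  have "S3 f = S3 (\<lambda>a b c. f b a c)" by (rule S3_sw0)
  also have "\<dots> = S3 (\<lambda>a b c. f c a b)" by (rule S3_sw1)
  finally show ?thesis .
qed

lemma S3_p120: "S3 f = S3 (\<lambda>a b c. f b c a)"
proof -
  have "S3 f = S3 (\<lambda>a b c. f a c b)" by (rule S3_sw1)
  also have "\<dots> = S3 (\<lambda>a b c. f b c a)" by (rule S3_sw0)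
  finally show ?thesis .
qed

lemma S3_p210: "S3 f = S3 (\<lambda>a b c. f c b a)"
proof -
  have "S3 f = S3 (\<lambda>a b c. f b a c)" by (rule S3_sw0)
  also have "\<dots> = S3 (\<lambda>a b c. f c a b)" by (rule S3_sw1)
  also have "\<dots> = S3 (\<lambda>a b c. f c b a)" by (rule S3_sw0)
  finally show ?thesis .
qed

lemma alg1:
  fixes gg :: "'n::finite \<Rightarrow> 'n \<Rightarrow> real" and dg :: "'n \<Rightarrow> 'n \<Rightarrow> 'n \<Rightarrow> real"
    and ddg :: "'n \<Rightarrow> 'n \<Rightarrow> 'n \<Rightarrow> 'n \<Rightarrow> real"
    and e z :: "'n \<Rightarrow> real" and de dz :: "'n \<Rightarrow> 'n \<Rightarrow> real" and dde ddz :: "'n \<Rightarrow> 'n \<Rightarrow> 'n \<Rightarrow> real"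
    and Gu :: "'n \<Rightarrow> 'n \<Rightarrow> 'n \<Rightarrow> real" and b m :: 'n
  assumes gs: "\<And>i j. gg i j = gg j i" and dgs: "\<And>c i j. dg c i j = dg c j i"
    and ddgs1: "\<And>c d i j. ddg c d i j = ddg d c i j" and ddgs2: "\<And>c d i j. ddg c d i j = ddg c d j i"
    and ddes: "\<And>k i j. dde k i j = dde k j i" and ddzs: "\<And>k i j. ddz k i j = ddz k j i"
    and Gus: "\<And>k i j. Gu k i j = Gu k j i"
  shows "(\<Sum>v1\<in>UNIV. ((z v1) * ((((\<Sum>v2\<in>UNIV. ((e v2) * (((((1 / 2) * (((ddg v2 b v1 m) + (ddg v2 m v1 b) + ((- (ddg v2 v1 b m))))))) + ((- ((\<Sum>v3\<in>UNIV. ((dg v2 v1 v3) * (Gu v3 b m))))))))))) + ((- ((\<Sum>v4\<in>UNIV. ((Gu v4 b m) * ((\<Sum>v5\<in>UNIV. ((gg v1 v5) * (de v5 v4))))))))) + ((\<Sum>v6\<in>UNIV. ((((1 / 2) * (((dg v6 v1 m) + (dg m v1 v6) + ((- (dg v1 v6 m))))))) * (de v6 b)))) + ((\<Sum>v7\<in>UNIV. ((gg v1 v7) * (dde v7 b m)))) + ((\<Sum>v8\<in>UNIV. ((((1 / 2) * (((dg b v1 v8) + (dg v8 v1 b) + ((- (dg v1 b v8))))))) * (de v8 m)))))))) = ((((1 / 2) * ((((((\<Sum>v9\<in>UNIV. ((((e v9) * ((\<Sum>v10\<in>UNIV. ((((gg m v10) * (ddz v10 b v9))) + (((dg b m v10)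 * (dz v10 v9))) + (((dg v9 m v10) * (dz v10 b))) + (((ddg b v9 m v10) * (z v10)))))))) + (((de v9 b) * ((\<Sum>v11\<in>UNIV. ((((gg m v11) * (dz v11 v9))) + (((dg v9 m v11) * (z v11))))))))))) + ((\<Sum>v12\<in>UNIV. (((((\<Sum>v13\<in>UNIV. ((gg v12 v13) * (z v13)))) * (dde v12 b m))) + ((((\<Sum>v14\<in>UNIV. ((((gg v12 v14) * (dz v14 b))) + (((dg b v12 v14) * (z v14)))))) * (de v12 m)))))))) + ((- ((((\<Sum>v15\<in>UNIV. ((e v15) * ((\<Sum>v16\<in>UNIV. ((((1 / 2) * (((dg b v16 m) + (dg m v16 b) + ((- (dg v16 b m))))))) * (dz v16 v15))))))) + ((\<Sum>v17\<in>UNIV. ((Gu v17 b m) * ((\<Sum>v18\<in>UNIV. ((e v18) * ((\<Sum>v19\<in>UNIV. ((dg v18 v17 v19) * (z v19)))))))))) + ((\<Sum>v20\<in>UNIV. ((Gu v20 b m) * ((\<Sum>v21\<in>UNIV. (((\<Sum>v22\<in>UNIV. ((gg v21 v22) * (z v22)))) * (de v21 v20))))))))))))))) + (((1 / 2) * ((((((\<Sum>v23\<in>UNIV. ((((e v23) * ((\<Sum>v24\<in>UNIV. ((((gg b v24) * (ddz v24 m v23))) + (((dg m b v24) * (dz v24 v23))) + (((dg v23 b v24) * (dz v24 m))) + (((ddg m v23 b v24) * (z v24)))))))) + (((de v23 m) * ((\<Sum>v25\<in>UNIV. ((((gg b v25) * (dz v25 v23))) + (((dg v23 b v25) * (z v25)))))))))))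 + ((\<Sum>v26\<in>UNIV. (((((\<Sum>v27\<in>UNIV. ((gg v26 v27) * (z v27)))) * (dde v26 m b))) + ((((\<Sum>v28\<in>UNIV. ((((gg v26 v28) * (dz v28 m))) + (((dg m v26 v28) * (z v28)))))) * (de v26 b)))))))) + ((- ((((\<Sum>v29\<in>UNIV. ((e v29) * ((\<Sum>v30\<in>UNIV. ((((1 / 2) * (((dg m v30 b) + (dg b v30 m) + ((- (dg v30 m b))))))) * (dz v30 v29))))))) + ((\<Sum>v31\<in>UNIV. ((Gu v31 m b) * ((\<Sum>v32\<in>UNIV. ((e v32) * ((\<Sum>v33\<in>UNIV. ((dg v32 v31 v33) * (z v33)))))))))) + ((\<Sum>v34\<in>UNIV. ((Gu v34 m b) * ((\<Sum>v35\<in>UNIV. (((\<Sum>v36\<in>UNIV. ((gg v35 v36) * (z v36)))) * (de v35 v34))))))))))))))) + ((- (1 / 2) * ((((\<Sum>v37\<in>UNIV. ((e v37) * ((((\<Sum>v38\<in>UNIV. ((((z v38) * (ddg v37 v38 b m))) + (((dz v38 v37) * (dg v38 b m)))))) + ((\<Sum>v39\<in>UNIV. ((((gg v39 m) * (ddz v39 v37 b))) + (((dg v37 v39 m) * (dz v39 b)))))) + ((\<Sum>v40\<in>UNIV. ((((gg b v40) * (ddz v40 v37 m))) + (((dg v37 b v40) * (dz v40 m))))))))))) + ((\<Sum>v41\<in>UNIV. (((((\<Sum>v42\<in>UNIV. ((z v42) * (dg v42 v41 m)))) + ((\<Sum>v43\<in>UNIV. ((gg v43 m) * (dz v43 v41))))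 + ((\<Sum>v44\<in>UNIV. ((gg v41 v44) * (dz v44 m)))))) * (de v41 b)))) + ((\<Sum>v45\<in>UNIV. (((((\<Sum>v46\<in>UNIV. ((z v46) * (dg v46 b v45)))) + ((\<Sum>v47\<in>UNIV. ((gg v47 v45) * (dz v47 b)))) + ((\<Sum>v48\<in>UNIV. ((gg b v48) * (dz v48 v45)))))) * (de v45 m)))))))))"
proof -
  have L: "(\<Sum>v1\<in>UNIV. ((z v1) * ((((\<Sum>v2\<in>UNIV. ((e v2) * (((((1 / 2) * (((ddg v2 b v1 m) + (ddg v2 m v1 b) + ((- (ddg v2 v1 b m))))))) + ((- ((\<Sum>v3\<in>UNIV. ((dg v2 v1 v3) * (Gu v3 b m))))))))))) + ((- ((\<Sum>v4\<in>UNIV. ((Gu v4 b m) * ((\<Sum>v5\<in>UNIV. ((gg v1 v5) * (de v5 v4))))))))) + ((\<Sum>v6\<in>UNIV. ((((1 / 2) * (((dg v6 v1 m) + (dg m v1 v6) + ((- (dg v1 v6 m))))))) * (de v6 b)))) + ((\<Sum>v7\<in>UNIV. ((gg v1 v7) * (dde v7 b m)))) + ((\<Sum>v8\<in>UNIV. ((((1 / 2) * (((dg b v1 v8) + (dg v8 v1 b) + ((- (dg v1 b v8))))))) * (de v8 m)))))))) = (1 / 2) * (S2 (\<lambda>v1 v2. z v1 * e v2 * ddg v2 b v1 m)) + (1 / 2) * (S2 (\<lambda>v1 v2. z v1 * e v2 * ddg v2 m v1 b)) + (-1 / 2) * (S2 (\<lambda>v1 v2. z v1 * e v2 * ddg v2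 v1 b m)) + (-1) * (S3 (\<lambda>v1 v2 v3. z v1 * e v2 * dg v2 v1 v3 * Gu v3 b m)) + (-1) * (S3 (\<lambda>v1 v4 v5. z v1 * Gu v4 b m * gg v1 v5 * de v5 v4)) + (1 / 2) * (S2 (\<lambda>v1 v6. z v1 * dg v6 v1 m * de v6 b)) + (1 / 2) * (S2 (\<lambda>v1 v6. z v1 * dg m v1 v6 * de v6 b)) + (-1 / 2) * (S2 (\<lambda>v1 v6. z v1 * dg v1 v6 m * de v6 b)) + (S2 (\<lambda>v1 v7. z v1 * gg v1 v7 * dde v7 b m)) + (1 / 2) * (S2 (\<lambda>v1 v8. z v1 * dg b v1 v8 * de v8 m)) + (1 / 2) * (S2 (\<lambda>v1 v8. z v1 * dg v8 v1 b * de v8 m)) + (-1 / 2) * (S2 (\<lambda>v1 v8. z v1 * dg v1 b v8 * de v8 m))"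
    by (simp add: S1_def S2_def S3_def sum_distrib_left sum_distrib_right sum.distrib sum_subtractf sum_negf algebra_simps)
  have R: "((((1 / 2) * ((((((\<Sum>v9\<in>UNIV. ((((e v9) * ((\<Sum>v10\<in>UNIV. ((((gg m v10) * (ddz v10 b v9))) + (((dg b m v10) * (dz v10 v9))) + (((dg v9 m v10) * (dz v10 b))) + (((ddg b v9 m v10) * (z v10)))))))) + (((de v9 b) * ((\<Sum>v11\<in>UNIV. ((((gg m v11) * (dz v11 v9))) + (((dg v9 m v11) * (z v11))))))))))) + ((\<Sum>v12\<in>UNIV. (((((\<Sum>v13\<in>UNIV. ((gg v12 v13) * (z v13)))) * (dde v12 b m))) + ((((\<Sum>v14\<in>UNIV. ((((gg v12 v14) * (dz v14 b))) + (((dg b v12 v14) * (z v14)))))) * (de v12 m)))))))) + ((- ((((\<Sum>v15\<in>UNIV. ((e v15) * ((\<Sum>v16\<in>UNIV. ((((1 / 2) * (((dg b v16 m) + (dg m v16 b) + ((- (dg v16 b m))))))) * (dz v16 v15))))))) + ((\<Sum>v17\<in>UNIV. ((Gu v17 b m) * ((\<Sum>v18\<in>UNIV. ((e v18) * ((\<Sum>v19\<in>UNIV. ((dg v18 v17 v19) * (z v19)))))))))) + ((\<Sum>v20\<in>UNIV. ((Gu v20 b m) * ((\<Sum>v21\<in>UNIV. (((\<Sum>v22\<in>UNIV. ((gg v21 v22) * (z v22)))) * (de v21 v20))))))))))))))) + (((1 / 2) * ((((((\<Sum>v23\<in>UNIV. ((((e v23) * ((\<Sum>v24\<in>UNIV.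 ((((gg b v24) * (ddz v24 m v23))) + (((dg m b v24) * (dz v24 v23))) + (((dg v23 b v24) * (dz v24 m))) + (((ddg m v23 b v24) * (z v24)))))))) + (((de v23 m) * ((\<Sum>v25\<in>UNIV. ((((gg b v25) * (dz v25 v23))) + (((dg v23 b v25) * (z v25))))))))))) + ((\<Sum>v26\<in>UNIV. (((((\<Sum>v27\<in>UNIV. ((gg v26 v27) * (z v27)))) * (dde v26 m b))) + ((((\<Sum>v28\<in>UNIV. ((((gg v26 v28) * (dz v28 m))) + (((dg m v26 v28) * (z v28)))))) * (de v26 b)))))))) + ((- ((((\<Sum>v29\<in>UNIV. ((e v29) * ((\<Sum>v30\<in>UNIV. ((((1 / 2) * (((dg m v30 b) + (dg b v30 m) + ((- (dg v30 m b))))))) * (dz v30 v29))))))) + ((\<Sum>v31\<in>UNIV. ((Gu v31 m b) * ((\<Sum>v32\<in>UNIV. ((e v32) * ((\<Sum>v33\<in>UNIV. ((dg v32 v31 v33) * (z v33)))))))))) + ((\<Sum>v34\<in>UNIV. ((Gu v34 m b) * ((\<Sum>v35\<in>UNIV. (((\<Sum>v36\<in>UNIV. ((gg v35 v36) * (z v36)))) * (de v35 v34))))))))))))))) + ((- (1 / 2) * ((((\<Sum>v37\<in>UNIV. ((e v37) * ((((\<Sum>v38\<in>UNIV. ((((z v38) * (ddg v37 v38 b m))) + (((dz v38 v37) * (dg v38 b m)))))) + ((\<Sum>v39\<in>UNIV. ((((gg v39 m) * (ddz v39 v37 b))) + (((dg v37 v39 m) * (dz v39 b)))))) + ((\<Sum>v40\<in>UNIV.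 ((((gg b v40) * (ddz v40 v37 m))) + (((dg v37 b v40) * (dz v40 m))))))))))) + ((\<Sum>v41\<in>UNIV. (((((\<Sum>v42\<in>UNIV. ((z v42) * (dg v42 v41 m)))) + ((\<Sum>v43\<in>UNIV. ((gg v43 m) * (dz v43 v41)))) + ((\<Sum>v44\<in>UNIV. ((gg v41 v44) * (dz v44 m)))))) * (de v41 b)))) + ((\<Sum>v45\<in>UNIV. (((((\<Sum>v46\<in>UNIV. ((z v46) * (dg v46 b v45)))) + ((\<Sum>v47\<in>UNIV. ((gg v47 v45) * (dz v47 b)))) + ((\<Sum>v48\<in>UNIV. ((gg b v48) * (dz v48 v45)))))) * (de v45 m))))))))) = (1 / 2) * (S2 (\<lambda>v9 v10. e v9 * gg m v10 * ddz v10 b v9)) + (1 / 2) * (S2 (\<lambda>v9 v10. e v9 * dg b m v10 * dz v10 v9)) + (1 / 2) * (S2 (\<lambda>v9 v10. e v9 * dg v9 m v10 * dz v10 b)) + (1 / 2) * (S2 (\<lambda>v9 v10. e v9 * ddg b v9 m v10 * z v10)) + (1 / 2) * (S2 (\<lambda>v9 v11. de v9 b * gg m v11 * dz v11 v9)) + (1 / 2) * (S2 (\<lambda>v9 v11. de v9 b * dg v9 m v11 * z v11)) + (1 / 2) * (S2 (\<lambda>v12 v13. gg v12 v13 * z v13 * dde v12 b m)) + (1 / 2) * (S2 (\<lambda>v12 v14. gg v12 v14 * dz v14 b * de v12 m)) + (1 / 2) * (S2 (\<lambda>v12 v14. dg b v12 v14 * z v14 * de v12 m)) + (-1 / 4)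 * (S2 (\<lambda>v15 v16. e v15 * dg b v16 m * dz v16 v15)) + (-1 / 4) * (S2 (\<lambda>v15 v16. e v15 * dg m v16 b * dz v16 v15)) + (1 / 4) * (S2 (\<lambda>v15 v16. e v15 * dg v16 b m * dz v16 v15)) + (-1 / 2) * (S3 (\<lambda>v17 v18 v19. Gu v17 b m * e v18 * dg v18 v17 v19 * z v19)) + (-1 / 2) * (S3 (\<lambda>v20 v21 v22. Gu v20 b m * gg v21 v22 * z v22 * de v21 v20)) + (1 / 2) * (S2 (\<lambda>v23 v24. e v23 * gg b v24 * ddz v24 m v23)) + (1 / 2) * (S2 (\<lambda>v23 v24. e v23 * dg m b v24 * dz v24 v23)) + (1 / 2) * (S2 (\<lambda>v23 v24. e v23 * dg v23 b v24 * dz v24 m)) + (1 / 2) * (S2 (\<lambda>v23 v24. e v23 * ddg m v23 b v24 * z v24)) + (1 / 2) * (S2 (\<lambda>v23 v25. de v23 m * gg b v25 * dz v25 v23)) + (1 / 2) * (S2 (\<lambda>v23 v25. de v23 m * dg v23 b v25 * z v25)) + (1 / 2) * (S2 (\<lambda>v26 v27. gg v26 v27 * z v27 * dde v26 m b)) + (1 / 2) * (S2 (\<lambda>v26 v28. gg v26 v28 * dz v28 m * de v26 b)) + (1 / 2) * (S2 (\<lambda>v26 v28. dg m v26 v28 * z v28 * de v26 b)) + (-1 / 4) * (S2 (\<lambda>v29 v30. e v29 * dg m v30 b * dz v30 v29)) + (-1 / 4) * (S2 (\<lambda>v29 v30. e v29 * dg b v30 m * dz v30 v29)) + (1 / 4)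 * (S2 (\<lambda>v29 v30. e v29 * dg v30 m b * dz v30 v29)) + (-1 / 2) * (S3 (\<lambda>v31 v32 v33. Gu v31 m b * e v32 * dg v32 v31 v33 * z v33)) + (-1 / 2) * (S3 (\<lambda>v34 v35 v36. Gu v34 m b * gg v35 v36 * z v36 * de v35 v34)) + (-1 / 2) * (S2 (\<lambda>v37 v38. e v37 * z v38 * ddg v37 v38 b m)) + (-1 / 2) * (S2 (\<lambda>v37 v38. e v37 * dz v38 v37 * dg v38 b m)) + (-1 / 2) * (S2 (\<lambda>v37 v39. e v37 * gg v39 m * ddz v39 v37 b)) + (-1 / 2) * (S2 (\<lambda>v37 v39. e v37 * dg v37 v39 m * dz v39 b)) + (-1 / 2) * (S2 (\<lambda>v37 v40. e v37 * gg b v40 * ddz v40 v37 m)) + (-1 / 2) * (S2 (\<lambda>v37 v40. e v37 * dg v37 b v40 * dz v40 m)) + (-1 / 2) * (S2 (\<lambda>v41 v42. z v42 * dg v42 v41 m * de v41 b)) + (-1 / 2) * (S2 (\<lambda>v41 v43. gg v43 m * dz v43 v41 * de v41 b)) + (-1 / 2) * (S2 (\<lambda>v41 v44. gg v41 v44 * dz v44 m * de v41 b)) + (-1 / 2) * (S2 (\<lambda>v45 v46. z v46 * dg v46 b v45 * de v45 m)) + (-1 / 2) * (S2 (\<lambda>v45 v47. gg v47 v45 * dz v47 b * de v45 m)) + (-1 / 2) * (S2 (\<lambda>v45 v48. gg b v48 * dz v48 v45 * de v45 m))"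
    by (simp add: S1_def S2_def S3_def sum_distrib_left sum_distrib_right sum.distrib sum_subtractf sum_negf algebra_simps)
  have l0: "S2 (\<lambda>v1 v2. z v1 * e v2 * ddg v2 b v1 m) = S2 (\<lambda>i j. ddg b i j m * e i * z j)"
    by (rule trans[OF S2_p10], rule S2_cong, simp add: gs dgs ddgs1 ddgs2 ddes ddzs Gus ac_simps)
  have l1: "S2 (\<lambda>v1 v2. z v1 * e v2 * ddg v2 m v1 b) = S2 (\<lambda>i j. ddg i m b j * e i * z j)"
    by (rule trans[OF S2_p10], rule S2_cong, simp add: gs dgs ddgs1 ddgs2 ddes ddzs Gus ac_simps)
  have l2: "S2 (\<lambda>v1 v2. z v1 * e v2 * ddg v2 v1 b m) = S2 (\<lambda>i j. ddg i j b m * e i * z j)"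
    by (rule trans[OF S2_p10], rule S2_cong, simp add: gs dgs ddgs1 ddgs2 ddes ddzs Gus ac_simps)
  have l3: "S3 (\<lambda>v1 v2 v3. z v1 * e v2 * dg v2 v1 v3 * Gu v3 b m) = S3 (\<lambda>i j k. Gu i b m * dg j i k * e j * z k)"
    by (rule trans[OF S3_p210], rule S3_cong, simp add: gs dgs ddgs1 ddgs2 ddes ddzs Gus ac_simps)
  have l4: "S3 (\<lambda>v1 v4 v5. z v1 * Gu v4 b m * gg v1 v5 * de v5 v4) = S3 (\<lambda>i j k. Gu i b m * de j i * gg j k * z k)"
    by (rule trans[OF S3_p201], rule S3_cong, simp add: gs dgs ddgs1 ddgs2 ddes ddzs Gus ac_simps)
  have l5: "S2 (\<lambda>v1 v6. z v1 * dg v6 v1 m * de v6 b) = S2 (\<lambda>i j. de i b * dg i j m * z j)"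
    by (rule trans[OF S2_p10], rule S2_cong, simp add: gs dgs ddgs1 ddgs2 ddes ddzs Gus ac_simps)
  have l6: "S2 (\<lambda>v1 v6. z v1 * dg m v1 v6 * de v6 b) = S2 (\<lambda>i j. de i b * dg m i j * z j)"
    by (rule trans[OF S2_p10], rule S2_cong, simp add: gs dgs ddgs1 ddgs2 ddes ddzs Gus ac_simps)
  have l7: "S2 (\<lambda>v1 v6. z v1 * dg v1 v6 m * de v6 b) = S2 (\<lambda>i j. de i b * dg j i m * z j)"
    by (rule trans[OF S2_p10], rule S2_cong, simp add: gs dgs ddgs1 ddgs2 ddes ddzs Gus ac_simps)
  have l8: "S2 (\<lambda>v1 v7. z v1 * gg v1 v7 * dde v7 b m) = S2 (\<lambda>i j. dde i b m * gg i j * z j)"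
    by (rule trans[OF S2_p10], rule S2_cong, simp add: gs dgs ddgs1 ddgs2 ddes ddzs Gus ac_simps)
  have l9: "S2 (\<lambda>v1 v8. z v1 * dg b v1 v8 * de v8 m) = S2 (\<lambda>i j. de i m * dg b i j * z j)"
    by (rule trans[OF S2_p10], rule S2_cong, simp add: gs dgs ddgs1 ddgs2 ddes ddzs Gus ac_simps)
  have l10: "S2 (\<lambda>v1 v8. z v1 * dg v8 v1 b * de v8 m) = S2 (\<lambda>i j. de i m * dg i b j * z j)"
    by (rule trans[OF S2_p10], rule S2_cong, simp add: gs dgs ddgs1 ddgs2 ddes ddzs Gus ac_simps)
  have l11: "S2 (\<lambda>v1 v8. z v1 * dg v1 b v8 * de v8 m) = S2 (\<lambda>i j. de i m * dg j b i * z j)"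
    by (rule trans[OF S2_p10], rule S2_cong, simp add: gs dgs ddgs1 ddgs2 ddes ddzs Gus ac_simps)
  have r0: "S2 (\<lambda>v9 v10. e v9 * gg m v10 * ddz v10 b v9) = S2 (\<lambda>i j. ddz i b j * e j * gg i m)"
    by (rule trans[OF S2_p10], rule S2_cong, simp add: gs dgs ddgs1 ddgs2 ddes ddzs Gus ac_simps)
  have r1: "S2 (\<lambda>v9 v10. e v9 * dg b m v10 * dz v10 v9) = S2 (\<lambda>i j. dg b i m * dz i j * e j)"
    by (rule trans[OF S2_p10], rule S2_cong, simp add: gs dgs ddgs1 ddgs2 ddes ddzs Gus ac_simps)
  have r2: "S2 (\<lambda>v9 v10. e v9 * dg v9 m v10 * dz v10 b) = S2 (\<lambda>i j. dg i j m * dz j b * e i)"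
    by (rule S2_cong, simp add: gs dgs ddgs1 ddgs2 ddes ddzs Gus ac_simps)
  have r3: "S2 (\<lambda>v9 v10. e v9 * ddg b v9 m v10 * z v10) = S2 (\<lambda>i j. ddg b i j m * e i * z j)"
    by (rule S2_cong, simp add: gs dgs ddgs1 ddgs2 ddes ddzs Gus ac_simps)
  have r4: "S2 (\<lambda>v9 v11. de v9 b * gg m v11 * dz v11 v9) = S2 (\<lambda>i j. de i b * dz j i * gg j m)"
    by (rule S2_cong, simp add: gs dgs ddgs1 ddgs2 ddes ddzs Gus ac_simps)
  have r5: "S2 (\<lambda>v9 v11. de v9 b * dg v9 m v11 * z v11) = S2 (\<lambda>i j. de i b * dg i j m * z j)"
    by (rule S2_cong, simp add: gs dgs ddgs1 ddgs2 ddes ddzs Gus ac_simps)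
  have r6: "S2 (\<lambda>v12 v13. gg v12 v13 * z v13 * dde v12 b m) = S2 (\<lambda>i j. dde i b m * gg i j * z j)"
    by (rule S2_cong, simp add: gs dgs ddgs1 ddgs2 ddes ddzs Gus ac_simps)
  have r7: "S2 (\<lambda>v12 v14. gg v12 v14 * dz v14 b * de v12 m) = S2 (\<lambda>i j. de i m * dz j b * gg i j)"
    by (rule S2_cong, simp add: gs dgs ddgs1 ddgs2 ddes ddzs Gus ac_simps)
  have r8: "S2 (\<lambda>v12 v14. dg b v12 v14 * z v14 * de v12 m) = S2 (\<lambda>i j. de i m * dg b i j * z j)"
    by (rule S2_cong, simp add: gs dgs ddgs1 ddgs2 ddes ddzs Gus ac_simps)
  have r9: "S2 (\<lambda>v15 v16. e v15 * dg b v16 m * dz v16 v15) = S2 (\<lambda>i j. dg b i m * dz i j * e j)"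
    by (rule trans[OF S2_p10], rule S2_cong, simp add: gs dgs ddgs1 ddgs2 ddes ddzs Gus ac_simps)
  have r10: "S2 (\<lambda>v15 v16. e v15 * dg m v16 b * dz v16 v15) = S2 (\<lambda>i j. dg m b i * dz i j * e j)"
    by (rule trans[OF S2_p10], rule S2_cong, simp add: gs dgs ddgs1 ddgs2 ddes ddzs Gus ac_simps)
  have r11: "S2 (\<lambda>v15 v16. e v15 * dg v16 b m * dz v16 v15) = S2 (\<lambda>i j. dg i b m * dz i j * e j)"
    by (rule trans[OF S2_p10], rule S2_cong, simp add: gs dgs ddgs1 ddgs2 ddes ddzs Gus ac_simps)
  have r12: "S3 (\<lambda>v17 v18 v19. Gu v17 b m * e v18 * dg v18 v17 v19 * z v19) = S3 (\<lambda>i j k. Gu i b m * dg j i k * e j * z k)"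
    by (rule S3_cong, simp add: gs dgs ddgs1 ddgs2 ddes ddzs Gus ac_simps)
  have r13: "S3 (\<lambda>v20 v21 v22. Gu v20 b m * gg v21 v22 * z v22 * de v21 v20) = S3 (\<lambda>i j k. Gu i b m * de j i * gg j k * z k)"
    by (rule S3_cong, simp add: gs dgs ddgs1 ddgs2 ddes ddzs Gus ac_simps)
  have r14: "S2 (\<lambda>v23 v24. e v23 * gg b v24 * ddz v24 m v23) = S2 (\<lambda>i j. ddz i j m * e j * gg b i)"
    by (rule trans[OF S2_p10], rule S2_cong, simp add: gs dgs ddgs1 ddgs2 ddes ddzs Gus ac_simps)
  have r15: "S2 (\<lambda>v23 v24. e v23 * dg m b v24 * dz v24 v23) = S2 (\<lambda>i j. dg m b i * dz i j * e j)"
    by (rule trans[OF S2_p10], rule S2_cong, simp add: gs dgs ddgs1 ddgs2 ddes ddzs Gus ac_simps)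
  have r16: "S2 (\<lambda>v23 v24. e v23 * dg v23 b v24 * dz v24 m) = S2 (\<lambda>i j. dg i b j * dz j m * e i)"
    by (rule S2_cong, simp add: gs dgs ddgs1 ddgs2 ddes ddzs Gus ac_simps)
  have r17: "S2 (\<lambda>v23 v24. e v23 * ddg m v23 b v24 * z v24) = S2 (\<lambda>i j. ddg i m b j * e i * z j)"
    by (rule S2_cong, simp add: gs dgs ddgs1 ddgs2 ddes ddzs Gus ac_simps)
  have r18: "S2 (\<lambda>v23 v25. de v23 m * gg b v25 * dz v25 v23) = S2 (\<lambda>i j. de i m * dz j i * gg b j)"
    by (rule S2_cong, simp add: gs dgs ddgs1 ddgs2 ddes ddzs Gus ac_simps)
  have r19: "S2 (\<lambda>v23 v25. de v23 m * dg v23 b v25 * z v25) = S2 (\<lambda>i j. de i m * dg i b j * z j)"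
    by (rule S2_cong, simp add: gs dgs ddgs1 ddgs2 ddes ddzs Gus ac_simps)
  have r20: "S2 (\<lambda>v26 v27. gg v26 v27 * z v27 * dde v26 m b) = S2 (\<lambda>i j. dde i b m * gg i j * z j)"
    by (rule S2_cong, simp add: gs dgs ddgs1 ddgs2 ddes ddzs Gus ac_simps)
  have r21: "S2 (\<lambda>v26 v28. gg v26 v28 * dz v28 m * de v26 b) = S2 (\<lambda>i j. de i b * dz j m * gg i j)"
    by (rule S2_cong, simp add: gs dgs ddgs1 ddgs2 ddes ddzs Gus ac_simps)
  have r22: "S2 (\<lambda>v26 v28. dg m v26 v28 * z v28 * de v26 b) = S2 (\<lambda>i j. de i b * dg m i j * z j)"
    by (rule S2_cong, simp add: gs dgs ddgs1 ddgs2 ddes ddzs Gus ac_simps)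
  have r23: "S2 (\<lambda>v29 v30. e v29 * dg m v30 b * dz v30 v29) = S2 (\<lambda>i j. dg m b i * dz i j * e j)"
    by (rule trans[OF S2_p10], rule S2_cong, simp add: gs dgs ddgs1 ddgs2 ddes ddzs Gus ac_simps)
  have r24: "S2 (\<lambda>v29 v30. e v29 * dg b v30 m * dz v30 v29) = S2 (\<lambda>i j. dg b i m * dz i j * e j)"
    by (rule trans[OF S2_p10], rule S2_cong, simp add: gs dgs ddgs1 ddgs2 ddes ddzs Gus ac_simps)
  have r25: "S2 (\<lambda>v29 v30. e v29 * dg v30 m b * dz v30 v29) = S2 (\<lambda>i j. dg i b m * dz i j * e j)"
    by (rule trans[OF S2_p10], rule S2_cong, simp add: gs dgs ddgs1 ddgs2 ddes ddzs Gus ac_simps)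
  have r26: "S3 (\<lambda>v31 v32 v33. Gu v31 m b * e v32 * dg v32 v31 v33 * z v33) = S3 (\<lambda>i j k. Gu i b m * dg j i k * e j * z k)"
    by (rule S3_cong, simp add: gs dgs ddgs1 ddgs2 ddes ddzs Gus ac_simps)
  have r27: "S3 (\<lambda>v34 v35 v36. Gu v34 m b * gg v35 v36 * z v36 * de v35 v34) = S3 (\<lambda>i j k. Gu i b m * de j i * gg j k * z k)"
    by (rule S3_cong, simp add: gs dgs ddgs1 ddgs2 ddes ddzs Gus ac_simps)
  have r28: "S2 (\<lambda>v37 v38. e v37 * z v38 * ddg v37 v38 b m) = S2 (\<lambda>i j. ddg i j b m * e i * z j)"
    by (rule S2_cong, simp add: gs dgs ddgs1 ddgs2 ddes ddzs Gus ac_simps)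
  have r29: "S2 (\<lambda>v37 v38. e v37 * dz v38 v37 * dg v38 b m) = S2 (\<lambda>i j. dg i b m * dz i j * e j)"
    by (rule trans[OF S2_p10], rule S2_cong, simp add: gs dgs ddgs1 ddgs2 ddes ddzs Gus ac_simps)
  have r30: "S2 (\<lambda>v37 v39. e v37 * gg v39 m * ddz v39 v37 b) = S2 (\<lambda>i j. ddz i b j * e j * gg i m)"
    by (rule trans[OF S2_p10], rule S2_cong, simp add: gs dgs ddgs1 ddgs2 ddes ddzs Gus ac_simps)
  have r31: "S2 (\<lambda>v37 v39. e v37 * dg v37 v39 m * dz v39 b) = S2 (\<lambda>i j. dg i j m * dz j b * e i)"
    by (rule S2_cong, simp add: gs dgs ddgs1 ddgs2 ddes ddzs Gus ac_simps)
  have r32: "S2 (\<lambda>v37 v40. e v37 * gg b v40 * ddz v40 v37 m) = S2 (\<lambda>i j. ddz i j m * e j * gg b i)"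
    by (rule trans[OF S2_p10], rule S2_cong, simp add: gs dgs ddgs1 ddgs2 ddes ddzs Gus ac_simps)
  have r33: "S2 (\<lambda>v37 v40. e v37 * dg v37 b v40 * dz v40 m) = S2 (\<lambda>i j. dg i b j * dz j m * e i)"
    by (rule S2_cong, simp add: gs dgs ddgs1 ddgs2 ddes ddzs Gus ac_simps)
  have r34: "S2 (\<lambda>v41 v42. z v42 * dg v42 v41 m * de v41 b) = S2 (\<lambda>i j. de i b * dg j i m * z j)"
    by (rule S2_cong, simp add: gs dgs ddgs1 ddgs2 ddes ddzs Gus ac_simps)
  have r35: "S2 (\<lambda>v41 v43. gg v43 m * dz v43 v41 * de v41 b) = S2 (\<lambda>i j. de i b * dz j i * gg j m)"
    by (rule S2_cong, simp add: gs dgs ddgs1 ddgs2 ddes ddzs Gus ac_simps)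
  have r36: "S2 (\<lambda>v41 v44. gg v41 v44 * dz v44 m * de v41 b) = S2 (\<lambda>i j. de i b * dz j m * gg i j)"
    by (rule S2_cong, simp add: gs dgs ddgs1 ddgs2 ddes ddzs Gus ac_simps)
  have r37: "S2 (\<lambda>v45 v46. z v46 * dg v46 b v45 * de v45 m) = S2 (\<lambda>i j. de i m * dg j b i * z j)"
    by (rule S2_cong, simp add: gs dgs ddgs1 ddgs2 ddes ddzs Gus ac_simps)
  have r38: "S2 (\<lambda>v45 v47. gg v47 v45 * dz v47 b * de v45 m) = S2 (\<lambda>i j. de i m * dz j b * gg i j)"
    by (rule S2_cong, simp add: gs dgs ddgs1 ddgs2 ddes ddzs Gus ac_simps)
  have r39: "S2 (\<lambda>v45 v48. gg b v48 * dz v48 v45 * de v45 m) = S2 (\<lambda>i j. de i m * dz j i * gg b j)"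
    by (rule S2_cong, simp add: gs dgs ddgs1 ddgs2 ddes ddzs Gus ac_simps)
  show ?thesis using L R l0 l1 l2 l3 l4 l5 l6 l7 l8 l9 l10 l11 r0 r1 r2 r3 r4 r5 r6 r7 r8 r9 r10 r11 r12 r13 r14 r15 r16 r17 r18 r19 r20 r21 r22 r23 r24 r25 r26 r27 r28 r29 r30 r31 r32 r33 r34 r35 r36 r37 r38 r39 by linarith
qed

lemma alg2:
  fixes gg :: "'n::finite \<Rightarrow> 'n \<Rightarrow> real" and dg :: "'n \<Rightarrow> 'n \<Rightarrow> 'n \<Rightarrow> real"
    and ddg :: "'n \<Rightarrow> 'n \<Rightarrow> 'n \<Rightarrow> 'n \<Rightarrow> real"
    and e z :: "'n \<Rightarrow> real" and de dz :: "'n \<Rightarrow> 'n \<Rightarrow> real" and dde ddz :: "'n \<Rightarrow> 'n \<Rightarrow> 'n \<Rightarrow> real"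
    and Gu :: "'n \<Rightarrow> 'n \<Rightarrow> 'n \<Rightarrow> real" and b m :: 'n
  assumes gs: "\<And>i j. gg i j = gg j i" and dgs: "\<And>c i j. dg c i j = dg c j i"
    and ddgs1: "\<And>c d i j. ddg c d i j = ddg d c i j" and ddgs2: "\<And>c d i j. ddg c d i j = ddg c d j i"
    and ddes: "\<And>k i j. dde k i j = dde k j i" and ddzs: "\<And>k i j. ddz k i j = ddz k j i"
    and Gus: "\<And>k i j. Gu k i j = Gu k j i"
  shows "(\<Sum>v1\<in>UNIV. ((z v1) * ((((\<Sum>v2\<in>UNIV. ((e v2) * (((((1 / 2) * (((ddg v2 b v1 m) + (ddg v2 m v1 b) + ((- (ddg v2 v1 b m))))))) + ((- ((\<Sum>v3\<in>UNIV. ((dg v2 v1 v3) * (Gu v3 b m))))))))))) + ((- ((\<Sum>v4\<in>UNIV. ((Gu v4 b m) * ((\<Sum>v5\<in>UNIV. ((gg v1 v5) * (de v5 v4))))))))) + ((\<Sum>v6\<in>UNIV. ((((1 / 2) * (((dg v6 v1 m) + (dg m v1 v6) + ((- (dg v1 v6 m))))))) * (de v6 b)))) + ((\<Sum>v7\<in>UNIV. ((gg v1 v7) * (dde v7 b m)))) + ((\<Sum>v8\<in>UNIV. ((((1 / 2) * (((dg b v1 v8) + (dg v8 v1 b) + ((- (dg v1 b v8))))))) * (de v8 m)))))))) = ((((1 / 2) * ((\<Sum>v49\<in>UNIV. (((((((\<Sum>v50\<in>UNIV. ((e v50) * (dg v50 m v49)))) + ((\<Sum>v51\<in>UNIV.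 ((gg v51 v49) * (de v51 m)))) + ((\<Sum>v52\<in>UNIV. ((gg m v52) * (de v52 v49)))))) * (dz v49 b))) + ((((((\<Sum>v53\<in>UNIV. ((((e v53) * (ddg b v53 m v49))) + (((de v53 b) * (dg v53 m v49)))))) + ((\<Sum>v54\<in>UNIV. ((((gg v54 v49) * (dde v54 b m))) + (((dg b v54 v49) * (de v54 m)))))) + ((\<Sum>v55\<in>UNIV. ((((gg m v55) * (dde v55 b v49))) + (((dg b m v55) * (de v55 v49)))))))) * (z v49)))))))) + (((1 / 2) * ((\<Sum>v56\<in>UNIV. (((((((\<Sum>v57\<in>UNIV. ((e v57) * (dg v57 b v56)))) + ((\<Sum>v58\<in>UNIV. ((gg v58 v56) * (de v58 b)))) + ((\<Sum>v59\<in>UNIV. ((gg b v59) * (de v59 v56)))))) * (dz v56 m))) + ((((((\<Sum>v60\<in>UNIV. ((((e v60) * (ddg m v60 b v56))) + (((de v60 m) * (dg v60 b v56)))))) + ((\<Sum>v61\<in>UNIV. ((((gg v61 v56) * (dde v61 m b))) + (((dg m v61 v56) * (de v61 b)))))) + ((\<Sum>v62\<in>UNIV. ((((gg b v62) * (dde v62 m v56))) + (((dg m b v62) * (de v62 v56)))))))) * (z v56)))))))) + ((- ((((\<Sum>v63\<in>UNIV. (((\<Sum>v64\<in>UNIV. (((((\<Sum>v65\<in>UNIV. ((e v65) * (dg v65 v63 v64)))) + ((\<Sum>v66\<in>UNIV. ((gg v66 v64) * (de v66 v63)))))) * (z v64)))) * (Gu v63 b m)))) + ((\<Sum>v67\<in>UNIV.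 (\<Sum>v68\<in>UNIV. ((((1 / 2) * (((dg b v68 m) + (dg m v68 b) + ((- (dg v68 b m))))))) * (de v68 v67) * (z v67))))))))) + ((- (1 / 2) * ((((\<Sum>v69\<in>UNIV. ((z v69) * ((((\<Sum>v70\<in>UNIV. ((((e v70) * (ddg v69 v70 b m))) + (((de v70 v69) * (dg v70 b m)))))) + ((\<Sum>v71\<in>UNIV. ((((gg v71 m) * (dde v71 v69 b))) + (((dg v69 v71 m) * (de v71 b)))))) + ((\<Sum>v72\<in>UNIV. ((((gg b v72) * (dde v72 v69 m))) + (((dg v69 b v72) * (de v72 m))))))))))) + ((\<Sum>v73\<in>UNIV. (((((\<Sum>v74\<in>UNIV. ((e v74) * (dg v74 v73 m)))) + ((\<Sum>v75\<in>UNIV. ((gg v75 m) * (de v75 v73)))) + ((\<Sum>v76\<in>UNIV. ((gg v73 v76) * (de v76 m)))))) * (dz v73 b)))) + ((\<Sum>v77\<in>UNIV. (((((\<Sum>v78\<in>UNIV. ((e v78) * (dg v78 b v77)))) + ((\<Sum>v79\<in>UNIV. ((gg v79 v77) * (de v79 b)))) + ((\<Sum>v80\<in>UNIV. ((gg b v80) * (de v80 v77)))))) * (dz v77 m)))))))))"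
proof -
  have L: "(\<Sum>v1\<in>UNIV. ((z v1) * ((((\<Sum>v2\<in>UNIV. ((e v2) * (((((1 / 2) * (((ddg v2 b v1 m) + (ddg v2 m v1 b) + ((- (ddg v2 v1 b m))))))) + ((- ((\<Sum>v3\<in>UNIV. ((dg v2 v1 v3) * (Gu v3 b m))))))))))) + ((- ((\<Sum>v4\<in>UNIV. ((Gu v4 b m) * ((\<Sum>v5\<in>UNIV. ((gg v1 v5) * (de v5 v4))))))))) + ((\<Sum>v6\<in>UNIV. ((((1 / 2) * (((dg v6 v1 m) + (dg m v1 v6) + ((- (dg v1 v6 m))))))) * (de v6 b)))) + ((\<Sum>v7\<in>UNIV. ((gg v1 v7) * (dde v7 b m)))) + ((\<Sum>v8\<in>UNIV. ((((1 / 2) * (((dg b v1 v8) + (dg v8 v1 b) + ((- (dg v1 b v8))))))) * (de v8 m)))))))) = (1 / 2) * (S2 (\<lambda>v1 v2. z v1 * e v2 * ddg v2 b v1 m)) + (1 / 2) * (S2 (\<lambda>v1 v2. z v1 * e v2 * ddg v2 m v1 b)) + (-1 / 2) * (S2 (\<lambda>v1 v2. z v1 * e v2 * ddg v2 v1 b m)) + (-1) * (S3 (\<lambda>v1 v2 v3. z v1 * e v2 * dg v2 v1 v3 * Gu v3 b m)) + (-1) * (S3 (\<lambda>v1 v4 v5. z v1 * Gu v4 b m * gg v1 v5 * de v5 v4)) + (1 / 2) * (S2 (\<lambda>v1 v6. z v1 * dg v6 v1 m * de v6 b)) + (1 / 2) * (S2 (\<lambda>v1 v6. z v1 * dg m v1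 v6 * de v6 b)) + (-1 / 2) * (S2 (\<lambda>v1 v6. z v1 * dg v1 v6 m * de v6 b)) + (S2 (\<lambda>v1 v7. z v1 * gg v1 v7 * dde v7 b m)) + (1 / 2) * (S2 (\<lambda>v1 v8. z v1 * dg b v1 v8 * de v8 m)) + (1 / 2) * (S2 (\<lambda>v1 v8. z v1 * dg v8 v1 b * de v8 m)) + (-1 / 2) * (S2 (\<lambda>v1 v8. z v1 * dg v1 b v8 * de v8 m))"
    by (simp add: S1_def S2_def S3_def sum_distrib_left sum_distrib_right sum.distrib sum_subtractf sum_negf algebra_simps)
  have R: "((((1 / 2) * ((\<Sum>v49\<in>UNIV. (((((((\<Sum>v50\<in>UNIV. ((e v50) * (dg v50 m v49)))) + ((\<Sum>v51\<in>UNIV. ((gg v51 v49) * (de v51 m)))) + ((\<Sum>v52\<in>UNIV. ((gg m v52) * (de v52 v49)))))) * (dz v49 b))) + ((((((\<Sum>v53\<in>UNIV. ((((e v53) * (ddg b v53 m v49))) + (((de v53 b) * (dg v53 m v49)))))) + ((\<Sum>v54\<in>UNIV. ((((gg v54 v49) * (dde v54 b m))) + (((dg b v54 v49) * (de v54 m)))))) + ((\<Sum>v55\<in>UNIV. ((((gg m v55) * (dde v55 b v49))) + (((dg b m v55) * (de v55 v49)))))))) * (z v49)))))))) + (((1 / 2) * ((\<Sum>v56\<in>UNIV. (((((((\<Sum>v57\<in>UNIV. ((e v57) * (dg v57 b v56)))) + ((\<Sum>v58\<in>UNIV. ((gg v58 v56) * (de v58 b)))) + ((\<Sum>v59\<in>UNIV.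 ((gg b v59) * (de v59 v56)))))) * (dz v56 m))) + ((((((\<Sum>v60\<in>UNIV. ((((e v60) * (ddg m v60 b v56))) + (((de v60 m) * (dg v60 b v56)))))) + ((\<Sum>v61\<in>UNIV. ((((gg v61 v56) * (dde v61 m b))) + (((dg m v61 v56) * (de v61 b)))))) + ((\<Sum>v62\<in>UNIV. ((((gg b v62) * (dde v62 m v56))) + (((dg m b v62) * (de v62 v56)))))))) * (z v56)))))))) + ((- ((((\<Sum>v63\<in>UNIV. (((\<Sum>v64\<in>UNIV. (((((\<Sum>v65\<in>UNIV. ((e v65) * (dg v65 v63 v64)))) + ((\<Sum>v66\<in>UNIV. ((gg v66 v64) * (de v66 v63)))))) * (z v64)))) * (Gu v63 b m)))) + ((\<Sum>v67\<in>UNIV. (\<Sum>v68\<in>UNIV. ((((1 / 2) * (((dg b v68 m) + (dg m v68 b) + ((- (dg v68 b m))))))) * (de v68 v67) * (z v67))))))))) + ((- (1 / 2) * ((((\<Sum>v69\<in>UNIV. ((z v69) * ((((\<Sum>v70\<in>UNIV. ((((e v70) * (ddg v69 v70 b m))) + (((de v70 v69) * (dg v70 b m)))))) + ((\<Sum>v71\<in>UNIV. ((((gg v71 m) * (dde v71 v69 b))) + (((dg v69 v71 m) * (de v71 b)))))) + ((\<Sum>v72\<in>UNIV. ((((gg b v72) * (dde v72 v69 m))) + (((dg v69 b v72) * (de v72 m))))))))))) + ((\<Sum>v73\<in>UNIV. (((((\<Sum>v74\<in>UNIV. ((e v74) * (dg v74 v73 m)))) + ((\<Sum>v75\<in>UNIV.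 ((gg v75 m) * (de v75 v73)))) + ((\<Sum>v76\<in>UNIV. ((gg v73 v76) * (de v76 m)))))) * (dz v73 b)))) + ((\<Sum>v77\<in>UNIV. (((((\<Sum>v78\<in>UNIV. ((e v78) * (dg v78 b v77)))) + ((\<Sum>v79\<in>UNIV. ((gg v79 v77) * (de v79 b)))) + ((\<Sum>v80\<in>UNIV. ((gg b v80) * (de v80 v77)))))) * (dz v77 m))))))))) = (1 / 2) * (S2 (\<lambda>v49 v50. e v50 * dg v50 m v49 * dz v49 b)) + (1 / 2) * (S2 (\<lambda>v49 v51. gg v51 v49 * de v51 m * dz v49 b)) + (1 / 2) * (S2 (\<lambda>v49 v52. gg m v52 * de v52 v49 * dz v49 b)) + (1 / 2) * (S2 (\<lambda>v49 v53. e v53 * ddg b v53 m v49 * z v49)) + (1 / 2) * (S2 (\<lambda>v49 v53. de v53 b * dg v53 m v49 * z v49)) + (1 / 2) * (S2 (\<lambda>v49 v54. gg v54 v49 * dde v54 b m * z v49)) + (1 / 2) * (S2 (\<lambda>v49 v54. dg b v54 v49 * de v54 m * z v49)) + (1 / 2) * (S2 (\<lambda>v49 v55. gg m v55 * dde v55 b v49 * z v49)) + (1 / 2) * (S2 (\<lambda>v49 v55. dg b m v55 * de v55 v49 * z v49)) + (1 / 2) * (S2 (\<lambda>v56 v57. e v57 * dg v57 b v56 * dz v56 m)) + (1 / 2) * (S2 (\<lambda>v56 v58. gg v58 v56 * de v58 b * dz v56 m)) + (1 / 2) * (S2 (\<lambda>v56 v59. gg b v59 * de v59 v56 * dz v56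 m)) + (1 / 2) * (S2 (\<lambda>v56 v60. e v60 * ddg m v60 b v56 * z v56)) + (1 / 2) * (S2 (\<lambda>v56 v60. de v60 m * dg v60 b v56 * z v56)) + (1 / 2) * (S2 (\<lambda>v56 v61. gg v61 v56 * dde v61 m b * z v56)) + (1 / 2) * (S2 (\<lambda>v56 v61. dg m v61 v56 * de v61 b * z v56)) + (1 / 2) * (S2 (\<lambda>v56 v62. gg b v62 * dde v62 m v56 * z v56)) + (1 / 2) * (S2 (\<lambda>v56 v62. dg m b v62 * de v62 v56 * z v56)) + (-1) * (S3 (\<lambda>v63 v64 v65. e v65 * dg v65 v63 v64 * z v64 * Gu v63 b m)) + (-1) * (S3 (\<lambda>v63 v64 v66. gg v66 v64 * de v66 v63 * z v64 * Gu v63 b m)) + (-1 / 2) * (S2 (\<lambda>v67 v68. dg b v68 m * de v68 v67 * z v67)) + (-1 / 2) * (S2 (\<lambda>v67 v68. dg m v68 b * de v68 v67 * z v67)) + (1 / 2) * (S2 (\<lambda>v67 v68. dg v68 b m * de v68 v67 * z v67)) + (-1 / 2) * (S2 (\<lambda>v69 v70. z v69 * e v70 * ddg v69 v70 b m)) + (-1 / 2) * (S2 (\<lambda>v69 v70. z v69 * de v70 v69 * dg v70 b m)) + (-1 / 2) * (S2 (\<lambda>v69 v71. z v69 * gg v71 m * dde v71 v69 b)) + (-1 / 2) * (S2 (\<lambda>v69 v71. z v69 * dg v69 v71 m * de v71 b)) + (-1 / 2) * (S2 (\<lambda>v69 v72. z v69 * gg b v72 * dde v72 v69 m)) + (-1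 / 2) * (S2 (\<lambda>v69 v72. z v69 * dg v69 b v72 * de v72 m)) + (-1 / 2) * (S2 (\<lambda>v73 v74. e v74 * dg v74 v73 m * dz v73 b)) + (-1 / 2) * (S2 (\<lambda>v73 v75. gg v75 m * de v75 v73 * dz v73 b)) + (-1 / 2) * (S2 (\<lambda>v73 v76. gg v73 v76 * de v76 m * dz v73 b)) + (-1 / 2) * (S2 (\<lambda>v77 v78. e v78 * dg v78 b v77 * dz v77 m)) + (-1 / 2) * (S2 (\<lambda>v77 v79. gg v79 v77 * de v79 b * dz v77 m)) + (-1 / 2) * (S2 (\<lambda>v77 v80. gg b v80 * de v80 v77 * dz v77 m))"
    by (simp add: S1_def S2_def S3_def sum_distrib_left sum_distrib_right sum.distrib sum_subtractf sum_negf algebra_simps)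
  have l0: "S2 (\<lambda>v1 v2. z v1 * e v2 * ddg v2 b v1 m) = S2 (\<lambda>i j. ddg b i j m * e i * z j)"
    by (rule trans[OF S2_p10], rule S2_cong, simp add: gs dgs ddgs1 ddgs2 ddes ddzs Gus ac_simps)
  have l1: "S2 (\<lambda>v1 v2. z v1 * e v2 * ddg v2 m v1 b) = S2 (\<lambda>i j. ddg i m b j * e i * z j)"
    by (rule trans[OF S2_p10], rule S2_cong, simp add: gs dgs ddgs1 ddgs2 ddes ddzs Gus ac_simps)
  have l2: "S2 (\<lambda>v1 v2. z v1 * e v2 * ddg v2 v1 b m) = S2 (\<lambda>i j. ddg i j b m * e i * z j)"
    by (rule trans[OF S2_p10], rule S2_cong, simp add: gs dgs ddgs1 ddgs2 ddes ddzs Gus ac_simps)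
  have l3: "S3 (\<lambda>v1 v2 v3. z v1 * e v2 * dg v2 v1 v3 * Gu v3 b m) = S3 (\<lambda>i j k. Gu i b m * dg j i k * e j * z k)"
    by (rule trans[OF S3_p210], rule S3_cong, simp add: gs dgs ddgs1 ddgs2 ddes ddzs Gus ac_simps)
  have l4: "S3 (\<lambda>v1 v4 v5. z v1 * Gu v4 b m * gg v1 v5 * de v5 v4) = S3 (\<lambda>i j k. Gu i b m * de j i * gg j k * z k)"
    by (rule trans[OF S3_p201], rule S3_cong, simp add: gs dgs ddgs1 ddgs2 ddes ddzs Gus ac_simps)
  have l5: "S2 (\<lambda>v1 v6. z v1 * dg v6 v1 m * de v6 b) = S2 (\<lambda>i j. de i b * dg i j m * z j)"
    by (rule trans[OF S2_p10], rule S2_cong, simp add: gs dgs ddgs1 ddgs2 ddes ddzs Gus ac_simps)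
  have l6: "S2 (\<lambda>v1 v6. z v1 * dg m v1 v6 * de v6 b) = S2 (\<lambda>i j. de i b * dg m i j * z j)"
    by (rule trans[OF S2_p10], rule S2_cong, simp add: gs dgs ddgs1 ddgs2 ddes ddzs Gus ac_simps)
  have l7: "S2 (\<lambda>v1 v6. z v1 * dg v1 v6 m * de v6 b) = S2 (\<lambda>i j. de i b * dg j i m * z j)"
    by (rule trans[OF S2_p10], rule S2_cong, simp add: gs dgs ddgs1 ddgs2 ddes ddzs Gus ac_simps)
  have l8: "S2 (\<lambda>v1 v7. z v1 * gg v1 v7 * dde v7 b m) = S2 (\<lambda>i j. dde i b m * gg i j * z j)"
    by (rule trans[OF S2_p10], rule S2_cong, simp add: gs dgs ddgs1 ddgs2 ddes ddzs Gus ac_simps)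
  have l9: "S2 (\<lambda>v1 v8. z v1 * dg b v1 v8 * de v8 m) = S2 (\<lambda>i j. de i m * dg b i j * z j)"
    by (rule trans[OF S2_p10], rule S2_cong, simp add: gs dgs ddgs1 ddgs2 ddes ddzs Gus ac_simps)
  have l10: "S2 (\<lambda>v1 v8. z v1 * dg v8 v1 b * de v8 m) = S2 (\<lambda>i j. de i m * dg i b j * z j)"
    by (rule trans[OF S2_p10], rule S2_cong, simp add: gs dgs ddgs1 ddgs2 ddes ddzs Gus ac_simps)
  have l11: "S2 (\<lambda>v1 v8. z v1 * dg v1 b v8 * de v8 m) = S2 (\<lambda>i j. de i m * dg j b i * z j)"
    by (rule trans[OF S2_p10], rule S2_cong, simp add: gs dgs ddgs1 ddgs2 ddes ddzs Gus ac_simps)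
  have r0: "S2 (\<lambda>v49 v50. e v50 * dg v50 m v49 * dz v49 b) = S2 (\<lambda>i j. dg i j m * dz j b * e i)"
    by (rule trans[OF S2_p10], rule S2_cong, simp add: gs dgs ddgs1 ddgs2 ddes ddzs Gus ac_simps)
  have r1: "S2 (\<lambda>v49 v51. gg v51 v49 * de v51 m * dz v49 b) = S2 (\<lambda>i j. de i m * dz j b * gg i j)"
    by (rule trans[OF S2_p10], rule S2_cong, simp add: gs dgs ddgs1 ddgs2 ddes ddzs Gus ac_simps)
  have r2: "S2 (\<lambda>v49 v52. gg m v52 * de v52 v49 * dz v49 b) = S2 (\<lambda>i j. de i j * dz j b * gg i m)"
    by (rule trans[OF S2_p10], rule S2_cong, simp add: gs dgs ddgs1 ddgs2 ddes ddzs Gus ac_simps)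
  have r3: "S2 (\<lambda>v49 v53. e v53 * ddg b v53 m v49 * z v49) = S2 (\<lambda>i j. ddg b i j m * e i * z j)"
    by (rule trans[OF S2_p10], rule S2_cong, simp add: gs dgs ddgs1 ddgs2 ddes ddzs Gus ac_simps)
  have r4: "S2 (\<lambda>v49 v53. de v53 b * dg v53 m v49 * z v49) = S2 (\<lambda>i j. de i b * dg i j m * z j)"
    by (rule trans[OF S2_p10], rule S2_cong, simp add: gs dgs ddgs1 ddgs2 ddes ddzs Gus ac_simps)
  have r5: "S2 (\<lambda>v49 v54. gg v54 v49 * dde v54 b m * z v49) = S2 (\<lambda>i j. dde i b m * gg i j * z j)"
    by (rule trans[OF S2_p10], rule S2_cong, simp add: gs dgs ddgs1 ddgs2 ddes ddzs Gus ac_simps)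
  have r6: "S2 (\<lambda>v49 v54. dg b v54 v49 * de v54 m * z v49) = S2 (\<lambda>i j. de i m * dg b i j * z j)"
    by (rule trans[OF S2_p10], rule S2_cong, simp add: gs dgs ddgs1 ddgs2 ddes ddzs Gus ac_simps)
  have r7: "S2 (\<lambda>v49 v55. gg m v55 * dde v55 b v49 * z v49) = S2 (\<lambda>i j. dde i b j * gg i m * z j)"
    by (rule trans[OF S2_p10], rule S2_cong, simp add: gs dgs ddgs1 ddgs2 ddes ddzs Gus ac_simps)
  have r8: "S2 (\<lambda>v49 v55. dg b m v55 * de v55 v49 * z v49) = S2 (\<lambda>i j. de i j * dg b i m * z j)"
    by (rule trans[OF S2_p10], rule S2_cong, simp add: gs dgs ddgs1 ddgs2 ddes ddzs Gus ac_simps)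
  have r9: "S2 (\<lambda>v56 v57. e v57 * dg v57 b v56 * dz v56 m) = S2 (\<lambda>i j. dg i b j * dz j m * e i)"
    by (rule trans[OF S2_p10], rule S2_cong, simp add: gs dgs ddgs1 ddgs2 ddes ddzs Gus ac_simps)
  have r10: "S2 (\<lambda>v56 v58. gg v58 v56 * de v58 b * dz v56 m) = S2 (\<lambda>i j. de i b * dz j m * gg i j)"
    by (rule trans[OF S2_p10], rule S2_cong, simp add: gs dgs ddgs1 ddgs2 ddes ddzs Gus ac_simps)
  have r11: "S2 (\<lambda>v56 v59. gg b v59 * de v59 v56 * dz v56 m) = S2 (\<lambda>i j. de i j * dz j m * gg b i)"
    by (rule trans[OF S2_p10], rule S2_cong, simp add: gs dgs ddgs1 ddgs2 ddes ddzs Gus ac_simps)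
  have r12: "S2 (\<lambda>v56 v60. e v60 * ddg m v60 b v56 * z v56) = S2 (\<lambda>i j. ddg i m b j * e i * z j)"
    by (rule trans[OF S2_p10], rule S2_cong, simp add: gs dgs ddgs1 ddgs2 ddes ddzs Gus ac_simps)
  have r13: "S2 (\<lambda>v56 v60. de v60 m * dg v60 b v56 * z v56) = S2 (\<lambda>i j. de i m * dg i b j * z j)"
    by (rule trans[OF S2_p10], rule S2_cong, simp add: gs dgs ddgs1 ddgs2 ddes ddzs Gus ac_simps)
  have r14: "S2 (\<lambda>v56 v61. gg v61 v56 * dde v61 m b * z v56) = S2 (\<lambda>i j. dde i b m * gg i j * z j)"
    by (rule trans[OF S2_p10], rule S2_cong, simp add: gs dgs ddgs1 ddgs2 ddes ddzs Gus ac_simps)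
  have r15: "S2 (\<lambda>v56 v61. dg m v61 v56 * de v61 b * z v56) = S2 (\<lambda>i j. de i b * dg m i j * z j)"
    by (rule trans[OF S2_p10], rule S2_cong, simp add: gs dgs ddgs1 ddgs2 ddes ddzs Gus ac_simps)
  have r16: "S2 (\<lambda>v56 v62. gg b v62 * dde v62 m v56 * z v56) = S2 (\<lambda>i j. dde i j m * gg b i * z j)"
    by (rule trans[OF S2_p10], rule S2_cong, simp add: gs dgs ddgs1 ddgs2 ddes ddzs Gus ac_simps)
  have r17: "S2 (\<lambda>v56 v62. dg m b v62 * de v62 v56 * z v56) = S2 (\<lambda>i j. de i j * dg m b i * z j)"
    by (rule trans[OF S2_p10], rule S2_cong, simp add: gs dgs ddgs1 ddgs2 ddes ddzs Gus ac_simps)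
  have r18: "S3 (\<lambda>v63 v64 v65. e v65 * dg v65 v63 v64 * z v64 * Gu v63 b m) = S3 (\<lambda>i j k. Gu i b m * dg j i k * e j * z k)"
    by (rule trans[OF S3_p021], rule S3_cong, simp add: gs dgs ddgs1 ddgs2 ddes ddzs Gus ac_simps)
  have r19: "S3 (\<lambda>v63 v64 v66. gg v66 v64 * de v66 v63 * z v64 * Gu v63 b m) = S3 (\<lambda>i j k. Gu i b m * de j i * gg j k * z k)"
    by (rule trans[OF S3_p021], rule S3_cong, simp add: gs dgs ddgs1 ddgs2 ddes ddzs Gus ac_simps)
  have r20: "S2 (\<lambda>v67 v68. dg b v68 m * de v68 v67 * z v67) = S2 (\<lambda>i j. de i j * dg b i m * z j)"
    by (rule trans[OF S2_p10], rule S2_cong, simp add: gs dgs ddgs1 ddgs2 ddes ddzs Gus ac_simps)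
  have r21: "S2 (\<lambda>v67 v68. dg m v68 b * de v68 v67 * z v67) = S2 (\<lambda>i j. de i j * dg m b i * z j)"
    by (rule trans[OF S2_p10], rule S2_cong, simp add: gs dgs ddgs1 ddgs2 ddes ddzs Gus ac_simps)
  have r22: "S2 (\<lambda>v67 v68. dg v68 b m * de v68 v67 * z v67) = S2 (\<lambda>i j. de i j * dg i b m * z j)"
    by (rule trans[OF S2_p10], rule S2_cong, simp add: gs dgs ddgs1 ddgs2 ddes ddzs Gus ac_simps)
  have r23: "S2 (\<lambda>v69 v70. z v69 * e v70 * ddg v69 v70 b m) = S2 (\<lambda>i j. ddg i j b m * e i * z j)"
    by (rule trans[OF S2_p10], rule S2_cong, simp add: gs dgs ddgs1 ddgs2 ddes ddzs Gus ac_simps)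
  have r24: "S2 (\<lambda>v69 v70. z v69 * de v70 v69 * dg v70 b m) = S2 (\<lambda>i j. de i j * dg i b m * z j)"
    by (rule trans[OF S2_p10], rule S2_cong, simp add: gs dgs ddgs1 ddgs2 ddes ddzs Gus ac_simps)
  have r25: "S2 (\<lambda>v69 v71. z v69 * gg v71 m * dde v71 v69 b) = S2 (\<lambda>i j. dde i b j * gg i m * z j)"
    by (rule trans[OF S2_p10], rule S2_cong, simp add: gs dgs ddgs1 ddgs2 ddes ddzs Gus ac_simps)
  have r26: "S2 (\<lambda>v69 v71. z v69 * dg v69 v71 m * de v71 b) = S2 (\<lambda>i j. de i b * dg j i m * z j)"
    by (rule trans[OF S2_p10], rule S2_cong, simp add: gs dgs ddgs1 ddgs2 ddes ddzs Gus ac_simps)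
  have r27: "S2 (\<lambda>v69 v72. z v69 * gg b v72 * dde v72 v69 m) = S2 (\<lambda>i j. dde i j m * gg b i * z j)"
    by (rule trans[OF S2_p10], rule S2_cong, simp add: gs dgs ddgs1 ddgs2 ddes ddzs Gus ac_simps)
  have r28: "S2 (\<lambda>v69 v72. z v69 * dg v69 b v72 * de v72 m) = S2 (\<lambda>i j. de i m * dg j b i * z j)"
    by (rule trans[OF S2_p10], rule S2_cong, simp add: gs dgs ddgs1 ddgs2 ddes ddzs Gus ac_simps)
  have r29: "S2 (\<lambda>v73 v74. e v74 * dg v74 v73 m * dz v73 b) = S2 (\<lambda>i j. dg i j m * dz j b * e i)"
    by (rule trans[OF S2_p10], rule S2_cong, simp add: gs dgs ddgs1 ddgs2 ddes ddzs Gus ac_simps)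
  have r30: "S2 (\<lambda>v73 v75. gg v75 m * de v75 v73 * dz v73 b) = S2 (\<lambda>i j. de i j * dz j b * gg i m)"
    by (rule trans[OF S2_p10], rule S2_cong, simp add: gs dgs ddgs1 ddgs2 ddes ddzs Gus ac_simps)
  have r31: "S2 (\<lambda>v73 v76. gg v73 v76 * de v76 m * dz v73 b) = S2 (\<lambda>i j. de i m * dz j b * gg i j)"
    by (rule trans[OF S2_p10], rule S2_cong, simp add: gs dgs ddgs1 ddgs2 ddes ddzs Gus ac_simps)
  have r32: "S2 (\<lambda>v77 v78. e v78 * dg v78 b v77 * dz v77 m) = S2 (\<lambda>i j. dg i b j * dz j m * e i)"
    by (rule trans[OF S2_p10], rule S2_cong, simp add: gs dgs ddgs1 ddgs2 ddes ddzs Gus ac_simps)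
  have r33: "S2 (\<lambda>v77 v79. gg v79 v77 * de v79 b * dz v77 m) = S2 (\<lambda>i j. de i b * dz j m * gg i j)"
    by (rule trans[OF S2_p10], rule S2_cong, simp add: gs dgs ddgs1 ddgs2 ddes ddzs Gus ac_simps)
  have r34: "S2 (\<lambda>v77 v80. gg b v80 * de v80 v77 * dz v77 m) = S2 (\<lambda>i j. de i j * dz j m * gg b i)"
    by (rule trans[OF S2_p10], rule S2_cong, simp add: gs dgs ddgs1 ddgs2 ddes ddzs Gus ac_simps)
  show ?thesis using L R l0 l1 l2 l3 l4 l5 l6 l7 l8 l9 l10 l11 r0 r1 r2 r3 r4 r5 r6 r7 r8 r9 r10 r11 r12 r13 r14 r15 r16 r17 r18 r19 r20 r21 r22 r23 r24 r25 r26 r27 r28 r29 r30 r31 r32 r33 r34 by linarith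
qed

lemma HD_s0: "smooth_fun U f \<Longrightarrow> open U \<Longrightarrow> y \<in> U \<Longrightarrow> HD i f y (pd i f y)"
  by (intro HD_at smooth_diff0)

lemma HD_s1: "smooth_fun U f \<Longrightarrow> open U \<Longrightarrow> y \<in> U \<Longrightarrow> HD i (pd c f) y (pd i (pd c f) y)"
  by (intro HD_at smooth_diff1)

lemma pd_const: "pd i (\<lambda>y. c) y = 0"
  by (rule HD_pd[OF HD_const])

lemma HDx_HD: "HDx i f y \<Longrightarrow> HD i f y (pd i f y)"
  unfolding HDx_def using HD_pd by metis

lemma HDx_add: "HDx i f y \<Longrightarrow> HDx i h y \<Longrightarrow> HDx i (\<lambda>y. f y + h y) y"
  unfolding HDx_def using HD_add by blast

lemma HDx_diff: "HDx i f y \<Longrightarrow> HDx i h y \<Longrightarrow> HDx i (\<lambda>y. f y - h y) y"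
  unfolding HDx_def using HD_diff by blast

lemma HDx_divc: "HDx i f y \<Longrightarrow> HDx i (\<lambda>y. f y / c) y"
  unfolding HDx_def using HD_divc by blast

lemma HDx_sum: fixes f :: "'j::finite \<Rightarrow> real^'n::finite \<Rightarrow> real"
  shows "(\<And>j. HDx i (f j) y) \<Longrightarrow> HDx i (\<lambda>y. \<Sum>j\<in>UNIV. f j y) y"
  by (rule HDx_sum_set) auto

lemma delta_sum: "(\<Sum>l\<in>(UNIV::'j::finite set). (if a = l then 1 else 0) * X l) = (X a::real)"
proof -
  have "\<And>l. (if a = l then 1 else 0) * X l = (if a = l then X l else 0)" by simp
  then show ?thesis by simp
qed

lemma delta_sum': "(\<Sum>l\<in>(UNIV::'j::finite set). (if l = a then 1 else 0) * X l) = (X a::real)"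
proof -
  have "\<And>l. (if l = a then 1 else 0) * X l = (if a = l then X l else 0)" by simp
  then show ?thesis by simp
qed

lemma HD_HDx: "HD i f y d \<Longrightarrow> HDx i f y"
  unfolding HDx_def by blast

locale geo =
  fixes U :: "(real^'n::finite) set" and g :: "'n tens2" and eta zeta :: "'n vfield" and x :: "real^'n"
  assumes SR: "semi_riemannian U g" and SE: "smooth_vf U eta" and SZ: "smooth_vf U zeta" and xU: "x \<in> U"
begin

lemma oU: "open U" using SR by (simp add: semi_riemannian_def)

lemma gsym: "y \<in> U \<Longrightarrow> g y $ a $ b = g y $ b $ a"
proof -
  assume "y \<in> U"
  then have "transpose (g y) = g y" using SR by (simp add: semi_riemannian_def)
  then have "transpose (g y) $ b $ a = g y $ b $ a" by simp
  then show ?thesis by (simp add: transpose_def)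
qed

lemma gdet: "y \<in> U \<Longrightarrow> det (g y) \<noteq> 0" using SR by (simp add: semi_riemannian_def)

lemma sg: "smooth_fun U (\<lambda>y. g y $ a $ b)" using SR by (simp add: semi_riemannian_def smooth_t2_def)
lemma se: "smooth_fun U (\<lambda>y. eta y $ k)" using SE by (simp add: smooth_vf_def)
lemma sz: "smooth_fun U (\<lambda>y. zeta y $ k)" using SZ by (simp add: smooth_vf_def)

lemma hg: "y \<in> U \<Longrightarrow> HD i (\<lambda>y. g y $ a $ b) y (pd i (\<lambda>y. g y $ a $ b) y)"
  by (rule HD_s0[OF sg oU])
lemma he: "y \<in> U \<Longrightarrow> HD i (\<lambda>y. eta y $ k) y (pd i (\<lambda>y. eta y $ k) y)"
  by (rule HD_s0[OF se oU])
lemma hz: "y \<in> U \<Longrightarrow> HD i (\<lambda>y. zeta y $ k) y (pd i (\<lambda>y. zeta y $ k) y)"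
  by (rule HD_s0[OF sz oU])
lemma hdg: "HD i (pd c (\<lambda>y. g y $ a $ b)) x (pd i (pd c (\<lambda>y. g y $ a $ b)) x)"
  by (rule HD_s1[OF sg oU xU])
lemma hde: "HD i (pd c (\<lambda>y. eta y $ k)) x (pd i (pd c (\<lambda>y. eta y $ k)) x)"
  by (rule HD_s1[OF se oU xU])
lemma hdz: "HD i (pd c (\<lambda>y. zeta y $ k)) x (pd i (pd c (\<lambda>y. zeta y $ k)) x)"
  by (rule HD_s1[OF sz oU xU])

lemma hG: "HDx i (\<lambda>y. ginv g y $ k $ l) x"
proof -
  have "HDx i (\<lambda>y. det (\<chi> r s. if s = k then axis l 1 $ r else g y $ r $ s) / det (g y)) x"
  proof (rule HDx_divide)
    show "HDx i (\<lambda>y. det (\<chi> r s. if s = k then axis l 1 $ r else g y $ r $ s)) x"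
    proof (rule HDx_det)
      fix a b
      show "HDx i (\<lambda>y. (\<chi> r s. if s = k then axis l 1 $ r else g y $ r $ s) $ a $ b) x"
        using HDx_const HD_HDx[OF hg[OF xU]] by (cases "b = k") auto
    qed
    show "HDx i (\<lambda>y. det (g y)) x"
      by (rule HDx_det) (rule HD_HDx[OF hg[OF xU]])
    show "det (g x) \<noteq> 0" by (rule gdet[OF xU])
  qed
  then obtain d where d: "HD i (\<lambda>y. det (\<chi> r s. if s = k then axis l 1 $ r else g y $ r $ s) / det (g y)) x d"
    unfolding HDx_def by blast
  have "HD i (\<lambda>y. ginv g y $ k $ l) x d"
    by (rule HD_local[OF oU xU _ d]) (simp add: ginv_def inv_entry_cramer gdet)
  then show ?thesis by (rule HD_HDx)
qed

lemma hGam: "HD i (\<lambda>y. christoffel g y k a b) x (pd i (\<lambda>y. christoffel g y k a b) x)"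
  unfolding christoffel_def
  by (intro HDx_HD HDx_divc HDx_sum HDx_mult hG HDx_add HDx_diff HD_HDx[OF hdg])

lemma ginv_mult: "y \<in> U \<Longrightarrow> (\<Sum>r\<in>UNIV. g y $ a $ r * ginv g y $ r $ l) = (if a = l then 1 else 0)"
proof -
  assume y: "y \<in> U"
  have "(g y ** ginv g y) $ a $ l = mat 1 $ a $ l" using inv_facts[OF gdet[OF y]] by (simp add: ginv_def)
  then show ?thesis by (simp add: matrix_matrix_mult_def mat_def)
qed

lemma ginv_sym: "ginv g x $ a $ b = ginv g x $ b $ a"
proof -
  let ?G = "ginv g x" and ?A = "g x"
  have A: "transpose ?A = ?A" using SR xU by (simp add: semi_riemannian_def)
  have 1: "?A ** ?G = mat 1" "?G ** ?A = mat 1" using inv_facts[OF gdet[OF xU]] by (simp_all add: ginv_def)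
  have "transpose ?G = transpose ?G ** (?A ** ?G)" by (simp add: 1)
  also have "\<dots> = (transpose ?G ** transpose ?A) ** ?G" by (simp add: A matrix_mul_assoc)
  also have "\<dots> = transpose (?A ** ?G) ** ?G" by (simp add: matrix_transpose_mul)
  also have "\<dots> = ?G" by (simp add: 1 transpose_mat)
  finally have "transpose ?G $ b $ a = ?G $ b $ a" by simp
  then show ?thesis by (simp add: transpose_def)
qed

lemma Gl_contract: "y \<in> U \<Longrightarrow> (\<Sum>r\<in>UNIV. g y $ a $ r * christoffel g y r i j) =
   (pd i (\<lambda>y. g y $ a $ j) y + pd j (\<lambda>y. g y $ a $ i) y - pd a (\<lambda>y. g y $ i $ j) y) / 2"
proof -
  assume y: "y \<in> U"
  let ?X = "\<lambda>l. pd i (\<lambda>y. g y $ l $ j) y + pd j (\<lambda>y. g y $ l $ i) y - pd l (\<lambda>y. g y $ i $ j) y"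
  have "(\<Sum>r\<in>UNIV. g y $ a $ r * christoffel g y r i j) = (\<Sum>r\<in>UNIV. \<Sum>l\<in>UNIV. g y $ a $ r * ginv g y $ r $ l * ?X l) / 2"
    by (simp add: christoffel_def sum_divide_distrib sum_distrib_left mult.assoc)
  also have "\<dots> = (\<Sum>l\<in>UNIV. (\<Sum>r\<in>UNIV. g y $ a $ r * ginv g y $ r $ l) * ?X l) / 2"
    by (subst sum.swap) (simp add: sum_distrib_right)
  also have "\<dots> = ?X a / 2" by (simp add: ginv_mult[OF y] delta_sum)
  finally show ?thesis .
qed

end

lemma delta_sum_r: "(\<Sum>l\<in>(UNIV::'j::finite set). X l * (if l = a then 1 else 0)) = (X a::real)"
proof -
  have "\<And>l. X l * (if l = a then 1 else 0) = (if a = l then X l else 0)" by simp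
  then show ?thesis by simp
qed

lemma axis_nth: "axis i (1::real) $ j = (if j = i then 1 else 0)"
  by (simp add: axis_def)

context geo
begin

lemma dgs_U: "y \<in> U \<Longrightarrow> pd c (\<lambda>y. g y $ i $ j) y = pd c (\<lambda>y. g y $ j $ i) y"
  by (rule pd_local[OF oU]) (auto simp: gsym)

lemma dgs: "pd c (\<lambda>y. g y $ i $ j) x = pd c (\<lambda>y. g y $ j $ i) x"
  by (rule dgs_U[OF xU])

lemma ddgs2: "pd c (pd d (\<lambda>y. g y $ i $ j)) x = pd c (pd d (\<lambda>y. g y $ j $ i)) x"
  by (rule pd_local[OF oU xU]) (rule dgs_U)

lemma ddgs1: "pd c (pd d (\<lambda>y. g y $ i $ j)) x = pd d (pd c (\<lambda>y. g y $ i $ j)) x"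
  by (rule smooth_schwarz[OF sg oU xU])

lemma ddes: "pd c (pd d (\<lambda>y. eta y $ k)) x = pd d (pd c (\<lambda>y. eta y $ k)) x"
  by (rule smooth_schwarz[OF se oU xU])

lemma ddzs: "pd c (pd d (\<lambda>y. zeta y $ k)) x = pd d (pd c (\<lambda>y. zeta y $ k)) x"
  by (rule smooth_schwarz[OF sz oU xU])

lemma Gus: "christoffel g x k i j = christoffel g x k j i"
proof -
  have "\<And>l. pd l (\<lambda>y. g y $ j $ i) x = pd l (\<lambda>y. g y $ i $ j) x" by (rule dgs)
  then show ?thesis unfolding christoffel_def by (simp add: add.commute)
qed

lemma lcA: "lc_nabla g W (coord_vf m) y $ k = (\<Sum>i\<in>UNIV. christoffel g y k i m * W y $ i)"
proof -
  have e: "\<And>i. (\<Sum>j\<in>UNIV. christoffel g y k i j * W y $ i * axis m 1 $ j) = christoffel g y k i m * W y $ i"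
    unfolding axis_nth by (rule delta_sum_r)
  show ?thesis
    unfolding lc_nabla_def dvf_def coord_vf_def by (simp only: vector_add_component vec_lambda_beta e) (simp add: pd_const)
qed

lemma lcB: "lc_nabla g (coord_vf b) W y $ k = pd b (\<lambda>z. W z $ k) y + (\<Sum>j\<in>UNIV. christoffel g y k b j * W y $ j)"
proof -
  have e: "\<And>i. (\<Sum>j\<in>UNIV. christoffel g y k i j * axis b 1 $ i * W y $ j) = axis b 1 $ i * (\<Sum>j\<in>UNIV. christoffel g y k i j * W y $ j)"
    by (simp add: sum_distrib_left ac_simps)
  show ?thesis
    unfolding lc_nabla_def dvf_def coord_vf_def by (simp only: vector_add_component vec_lambda_beta e) (simp add: axis_nth delta_sum')
qed

lemma lie_coord: "lie_vf eta (coord_vf b) y $ k = - pd b (\<lambda>z. eta z $ k) y"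
  unfolding lie_vf_def dvf_def coord_vf_def
  by (simp add: pd_const axis_nth delta_sum')

lemma lc_coord: "lc_nabla g (coord_vf b) (coord_vf m) y $ k = christoffel g y k b m"
  by (simp add: lcA coord_vf_def axis_nth delta_sum_r mult.commute)

lemma pd_neg_dde: "pd b (\<lambda>y. - pd m (\<lambda>z. eta z $ k) y) x = - pd b (pd m (\<lambda>z. eta z $ k)) x"
  by (rule HD_pd, rule HD_minus, rule hde)

lemma Sigma_up_eq: "Sigma_up g eta x r b m =
   (\<Sum>i\<in>UNIV. eta x $ i * pd i (\<lambda>y. christoffel g y r b m) x)
   - (\<Sum>i\<in>UNIV. christoffel g x i b m * pd i (\<lambda>y. eta y $ r) x)
   + (\<Sum>i\<in>UNIV. christoffel g x r i m * pd b (\<lambda>y. eta y $ i) x)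
   + pd b (pd m (\<lambda>y. eta y $ r)) x
   + (\<Sum>j\<in>UNIV. christoffel g x r b j * pd m (\<lambda>y. eta y $ j) x)"
proof -
  have 1: "lie_vf eta (lc_nabla g (coord_vf b) (coord_vf m)) x $ r =
     (\<Sum>i\<in>UNIV. eta x $ i * pd i (\<lambda>y. christoffel g y r b m) x)
   - (\<Sum>i\<in>UNIV. christoffel g x i b m * pd i (\<lambda>y. eta y $ r) x)"
    unfolding lie_vf_def dvf_def by (simp add: lc_coord)
  have 2: "lc_nabla g (lie_vf eta (coord_vf b)) (coord_vf m) x $ r =
     - (\<Sum>i\<in>UNIV. christoffel g x r i m * pd b (\<lambda>y. eta y $ i) x)"
    by (simp only: lcA lie_coord mult_minus_right sum_negf)
  have 3: "lc_nabla g (coord_vf b) (lie_vf eta (coord_vf m)) x $ r =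
     - pd b (pd m (\<lambda>y. eta y $ r)) x - (\<Sum>j\<in>UNIV. christoffel g x r b j * pd m (\<lambda>y. eta y $ j) x)"
  proof -
    have a: "(\<lambda>z. lie_vf eta (coord_vf m) z $ r) = (\<lambda>z. - pd m (\<lambda>z. eta z $ r) z)"
      by (rule ext, rule lie_coord)
    have b: "(\<Sum>j\<in>UNIV. christoffel g x r b j * lie_vf eta (coord_vf m) x $ j) =
       - (\<Sum>j\<in>UNIV. christoffel g x r b j * pd m (\<lambda>y. eta y $ j) x)"
      by (simp only: lie_coord mult_minus_right sum_negf)
    show ?thesis unfolding lcB a b pd_neg_dde by simp
  qed
  show ?thesis unfolding Sigma_up_def Sigma_op_def vector_minus_component 1 2 3 by (simp add: algebra_simps)
qed

end

context geo
begin

lemma dGu: "(\<Sum>r\<in>UNIV. g x $ a $ r * pd i (\<lambda>y. christoffel g y r b m) x) =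
   (pd i (pd b (\<lambda>y. g y $ a $ m)) x + pd i (pd m (\<lambda>y. g y $ a $ b)) x - pd i (pd a (\<lambda>y. g y $ b $ m)) x) / 2
   - (\<Sum>r\<in>UNIV. pd i (\<lambda>y. g y $ a $ r) x * christoffel g x r b m)"
proof -
  have h1: "HD i (\<lambda>y. \<Sum>r\<in>UNIV. g y $ a $ r * christoffel g y r b m) x
     (\<Sum>r\<in>UNIV. g x $ a $ r * pd i (\<lambda>y. christoffel g y r b m) x + pd i (\<lambda>y. g y $ a $ r) x * christoffel g x r b m)"
    by (rule HD_sum, rule HD_mult, rule hg[OF xU], rule hGam)
  have h2: "HD i (\<lambda>y. (pd b (\<lambda>y. g y $ a $ m) y + pd m (\<lambda>y. g y $ a $ b) y - pd a (\<lambda>y. g y $ b $ m) y) / 2) x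
     ((pd i (pd b (\<lambda>y. g y $ a $ m)) x + pd i (pd m (\<lambda>y. g y $ a $ b)) x - pd i (pd a (\<lambda>y. g y $ b $ m)) x) / 2)"
    by (intro HD_divc HD_diff HD_add hdg)
  have "pd i (\<lambda>y. \<Sum>r\<in>UNIV. g y $ a $ r * christoffel g y r b m) x =
        pd i (\<lambda>y. (pd b (\<lambda>y. g y $ a $ m) y + pd m (\<lambda>y. g y $ a $ b) y - pd a (\<lambda>y. g y $ b $ m) y) / 2) x"
    by (rule pd_local[OF oU xU]) (rule Gl_contract)
  then have "(\<Sum>r\<in>UNIV. g x $ a $ r * pd i (\<lambda>y. christoffel g y r b m) x + pd i (\<lambda>y. g y $ a $ r) x * christoffel g x r b m)
     = (pd i (pd b (\<lambda>y. g y $ a $ m)) x + pd i (pd m (\<lambda>y. g y $ a $ b)) x - pd i (pd a (\<lambda>y. g y $ b $ m)) x) / 2"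
    using HD_pd[OF h1] HD_pd[OF h2] by simp
  then show ?thesis by (simp add: sum.distrib algebra_simps)
qed

lemma swap_mult: "(\<Sum>r\<in>UNIV. (A r::real) * (\<Sum>i\<in>UNIV. B i * C r i)) = (\<Sum>i\<in>UNIV. B i * (\<Sum>r\<in>UNIV. A r * C r i))"
  unfolding sum_distrib_left by (subst sum.swap) (simp add: mult.left_commute)

lemma swap_mult2: "(\<Sum>r\<in>UNIV. (A r::real) * (\<Sum>i\<in>UNIV. C r i * B i)) = (\<Sum>i\<in>UNIV. (\<Sum>r\<in>UNIV. A r * C r i) * B i)"
  unfolding sum_distrib_left sum_distrib_right by (subst sum.swap) (simp add: mult.assoc)

lemma Sigma_low_eq: "Sigma_low g eta x a b m = (((\<Sum>v81\<in>UNIV. ((eta x $ v81) * (((((1 / 2) * (((pd v81 (pd b (\<lambda>y. g y $ a $ m)) x) + (pd v81 (pd m (\<lambda>y. g y $ a $ b)) x) + ((- (pd v81 (pd a (\<lambda>y. g y $ b $ m)) x))))))) + ((- ((\<Sum>v82\<in>UNIV. ((pd v81 (\<lambda>y. g y $ a $ v82) x) * (christoffel g x v82 b m))))))))))) + ((- ((\<Sum>v83\<in>UNIV. ((christoffel g x v83 b m) * ((\<Sum>v84\<in>UNIV. ((g x $ a $ v84) * (pd v83 (\<lambda>y. eta y $ v84) x))))))))) + ((\<Sum>v85\<in>UNIV. ((((1 / 2) * (((pd v85 (\<lambda>y. g y $ a $ m) x) + (pd m (\<lambda>y. g y $ a $ v85) x) + ((- (pd a (\<lambda>y. g y $ v85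 $ m) x))))))) * (pd b (\<lambda>y. eta y $ v85) x)))) + ((\<Sum>v86\<in>UNIV. ((g x $ a $ v86) * (pd b (pd m (\<lambda>y. eta y $ v86)) x)))) + ((\<Sum>v87\<in>UNIV. ((((1 / 2) * (((pd b (\<lambda>y. g y $ a $ v87) x) + (pd v87 (\<lambda>y. g y $ a $ b) x) + ((- (pd a (\<lambda>y. g y $ b $ v87) x))))))) * (pd m (\<lambda>y. eta y $ v87) x)))))"
proof -
  have s: "Sigma_low g eta x a b m =
     (\<Sum>r\<in>UNIV. g x $ a $ r * (\<Sum>i\<in>UNIV. eta x $ i * pd i (\<lambda>y. christoffel g y r b m) x))
   - (\<Sum>r\<in>UNIV. g x $ a $ r * (\<Sum>i\<in>UNIV. christoffel g x i b m * pd i (\<lambda>y. eta y $ r) x))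
   + (\<Sum>r\<in>UNIV. g x $ a $ r * (\<Sum>i\<in>UNIV. christoffel g x r i m * pd b (\<lambda>y. eta y $ i) x))
   + (\<Sum>r\<in>UNIV. g x $ a $ r * pd b (pd m (\<lambda>y. eta y $ r)) x)
   + (\<Sum>r\<in>UNIV. g x $ a $ r * (\<Sum>j\<in>UNIV. christoffel g x r b j * pd m (\<lambda>y. eta y $ j) x))"
    unfolding Sigma_low_def Sigma_up_eq by (simp add: sum.distrib sum_subtractf ring_distribs)
  have c1: "(\<Sum>r\<in>UNIV. g x $ a $ r * (\<Sum>i\<in>UNIV. eta x $ i * pd i (\<lambda>y. christoffel g y r b m) x))
     = (\<Sum>i\<in>UNIV. eta x $ i * ((pd i (pd b (\<lambda>y. g y $ a $ m)) x + pd i (pd m (\<lambda>y. g y $ a $ b)) x - pd i (pd a (\<lambda>y. g y $ b $ m)) x) / 2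
   - (\<Sum>r\<in>UNIV. pd i (\<lambda>y. g y $ a $ r) x * christoffel g x r b m)))"
    by (simp only: swap_mult dGu)
  have c2: "(\<Sum>r\<in>UNIV. g x $ a $ r * (\<Sum>i\<in>UNIV. christoffel g x i b m * pd i (\<lambda>y. eta y $ r) x))
     = (\<Sum>i\<in>UNIV. christoffel g x i b m * (\<Sum>r\<in>UNIV. g x $ a $ r * pd i (\<lambda>y. eta y $ r) x))"
    by (rule swap_mult)
  have c3: "(\<Sum>r\<in>UNIV. g x $ a $ r * (\<Sum>i\<in>UNIV. christoffel g x r i m * pd b (\<lambda>y. eta y $ i) x))
     = (\<Sum>i\<in>UNIV. ((pd i (\<lambda>y. g y $ a $ m) x + pd m (\<lambda>y. g y $ a $ i) x - pd a (\<lambda>y. g y $ i $ m) x) / 2) * pd b (\<lambda>y. eta y $ i) x)"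
    by (simp only: swap_mult2 Gl_contract[OF xU])
  have c5: "(\<Sum>r\<in>UNIV. g x $ a $ r * (\<Sum>j\<in>UNIV. christoffel g x r b j * pd m (\<lambda>y. eta y $ j) x))
     = (\<Sum>j\<in>UNIV. ((pd b (\<lambda>y. g y $ a $ j) x + pd j (\<lambda>y. g y $ a $ b) x - pd a (\<lambda>y. g y $ b $ j) x) / 2) * pd m (\<lambda>y. eta y $ j) x)"
    by (simp only: swap_mult2 Gl_contract[OF xU])
  show ?thesis unfolding s c1 c2 c3 c5 by (simp add: algebra_simps sum.distrib sum_subtractf add_divide_distrib diff_divide_distrib sum_distrib_left)
qed

end

context geo
begin

lemma lie_t2_nth: "lie_t2 X T x $ a $ b = (\<Sum>c\<in>UNIV. X x $ c * pd c (\<lambda>y. T y $ a $ b) x)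
      + (\<Sum>c\<in>UNIV. T x $ c $ b * pd a (\<lambda>y. X y $ c) x)
      + (\<Sum>c\<in>UNIV. T x $ a $ c * pd b (\<lambda>y. X y $ c) x)"
  by (simp add: lie_t2_def)

lemma flat_pd: "y \<in> U \<Longrightarrow> pd c (\<lambda>z. flat g zeta z $ m) y =
   (\<Sum>d\<in>UNIV. g y $ m $ d * pd c (\<lambda>z. zeta z $ d) y + pd c (\<lambda>z. g z $ m $ d) y * zeta y $ d)"
  unfolding flat_def vec_lambda_beta
  by (rule HD_pd, rule HD_sum, rule HD_mult, rule hg, assumption, rule hz, assumption)

definition Wf :: "real^'n \<Rightarrow> 'n \<Rightarrow> real" where
  "Wf y m = (\<Sum>c\<in>UNIV. eta y $ c * (\<Sum>d\<in>UNIV. g y $ m $ d * pd c (\<lambda>z. zeta z $ d) y + pd c (\<lambda>z. g z $ m $ d) y * zeta y $ d))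
     + (\<Sum>c\<in>UNIV. (\<Sum>d\<in>UNIV. g y $ c $ d * zeta y $ d) * pd m (\<lambda>z. eta z $ c) y)"

lemma lf_U: "y \<in> U \<Longrightarrow> lie_form eta (flat g zeta) y $ m = Wf y m"
  unfolding lie_form_def Wf_def by (simp add: flat_pd) (simp add: flat_def)

lemma DW_eq: "pd b (\<lambda>y. lie_form eta (flat g zeta) y $ m) x = (((\<Sum>v81\<in>UNIV. ((((eta x $ v81) * ((\<Sum>v82\<in>UNIV. ((((g x $ m $ v82) * (pd b (pd v81 (\<lambda>y. zeta y $ v82)) x))) + (((pd b (\<lambda>y. g y $ m $ v82) x) * (pd v81 (\<lambda>y. zeta y $ v82) x))) + (((pd v81 (\<lambda>y. g y $ m $ v82) x) * (pd b (\<lambda>y. zeta y $ v82) x))) + (((pd b (pd v81 (\<lambda>y. g y $ m $ v82)) x) * (zeta x $ v82)))))))) + (((pd b (\<lambda>y. eta y $ v81) x) * ((\<Sum>v83\<in>UNIV. ((((g x $ m $ v83) * (pd v81 (\<lambda>y. zeta y $ v83) x))) + (((pd v81 (\<lambda>y. g y $ m $ v83) x) * (zeta x $ v83))))))))))) + ((\<Sum>v84\<in>UNIV. (((((\<Sum>v85\<in>UNIV. ((g x $ v84 $ v85) * (zeta x $ v85)))) * (pd b (pd m (\<lambda>y. eta y $ v84)) x))) + ((((\<Sum>v86\<in>UNIV. ((((g x $ v84 $ v86) * (pd b (\<lambda>y. zeta y $ v86) x))) + (((pd b (\<lambda>y. g y $ v84 $ v86) x) * (zeta x $ v86)))))) *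 (pd m (\<lambda>y. eta y $ v84) x)))))))"
proof -
  have "pd b (\<lambda>y. lie_form eta (flat g zeta) y $ m) x = pd b (\<lambda>y. Wf y m) x"
    by (rule pd_local[OF oU xU]) (rule lf_U)
  also have "\<dots> = (((\<Sum>v81\<in>UNIV. ((((eta x $ v81) * ((\<Sum>v82\<in>UNIV. ((((g x $ m $ v82) * (pd b (pd v81 (\<lambda>y. zeta y $ v82)) x))) + (((pd b (\<lambda>y. g y $ m $ v82) x) * (pd v81 (\<lambda>y. zeta y $ v82) x))) + (((pd v81 (\<lambda>y. g y $ m $ v82) x) * (pd b (\<lambda>y. zeta y $ v82) x))) + (((pd b (pd v81 (\<lambda>y. g y $ m $ v82)) x) * (zeta x $ v82)))))))) + (((pd b (\<lambda>y. eta y $ v81) x) * ((\<Sum>v83\<in>UNIV. ((((g x $ m $ v83) * (pd v81 (\<lambda>y. zeta y $ v83) x))) + (((pd v81 (\<lambda>y. g y $ m $ v83) x) * (zeta x $ v83))))))))))) + ((\<Sum>v84\<in>UNIV. (((((\<Sum>v85\<in>UNIV. ((g x $ v84 $ v85) * (zeta x $ v85)))) * (pd b (pd m (\<lambda>y. eta y $ v84)) x))) + ((((\<Sum>v86\<in>UNIV. ((((g x $ v84 $ v86) * (pd b (\<lambda>y. zeta y $ v86) x))) + (((pd b (\<lambda>y. g y $ v84 $ v86) x) * (zeta x $ v86)))))) * (pd m (\<lambda>y. eta y $ v84) x)))))))"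
    unfolding Wf_def
    apply (rule HD_pd)
    apply (rule HD_eq)
     apply (rule HD_sum HD_add HD_mult he[OF xU] hz[OF xU] hg[OF xU] hde hdz hdg)+
    apply (simp add: algebra_simps sum.distrib)
    done
  finally show ?thesis .
qed

lemma gGamma: "(\<Sum>r\<in>UNIV. christoffel g x r b m * g x $ r $ d) =
   (pd b (\<lambda>y. g y $ d $ m) x + pd m (\<lambda>y. g y $ d $ b) x - pd d (\<lambda>y. g y $ b $ m) x) / 2"
  using Gl_contract[OF xU, of d b m] by (simp add: gsym[OF xU, of d] mult.commute)

lemma GW_eq: "(\<Sum>r\<in>UNIV. christoffel g x r b m * Wf x r) = (((\<Sum>v87\<in>UNIV. ((eta x $ v87) * ((\<Sum>v88\<in>UNIV. ((((1 / 2) * (((pd b (\<lambda>y. g y $ v88 $ m) x) + (pd m (\<lambda>y. g y $ v88 $ b) x) + ((- (pd v88 (\<lambda>y. g y $ b $ m) x))))))) * (pd v87 (\<lambda>y. zeta y $ v88) x))))))) + ((\<Sum>v89\<in>UNIV. ((christoffel g x v89 b m) * ((\<Sum>v90\<in>UNIV. ((eta x $ v90) * ((\<Sum>v91\<in>UNIV. ((pd v90 (\<lambda>y. g y $ v89 $ v91) x) * (zeta x $ v91)))))))))) + ((\<Sum>v92\<in>UNIV. ((christoffel g x v92 b m) * ((\<Sum>v93\<in>UNIV. (((\<Sum>v94\<in>UNIV. ((g x $ v93 $ v94) * (zeta x $ v94)))) * (pd v92 (\<lambda>y. eta y $ v93) x))))))))"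
proof -
  have t: "(\<Sum>r\<in>UNIV. christoffel g x r b m * (\<Sum>c\<in>UNIV. eta x $ c * (\<Sum>d\<in>UNIV. g x $ r $ d * pd c (\<lambda>z. zeta z $ d) x)))
     = (\<Sum>c\<in>UNIV. eta x $ c * (\<Sum>d\<in>UNIV. (\<Sum>r\<in>UNIV. christoffel g x r b m * g x $ r $ d) * pd c (\<lambda>z. zeta z $ d) x))"
  proof -
    have "(\<Sum>r\<in>UNIV. christoffel g x r b m * (\<Sum>c\<in>UNIV. eta x $ c * (\<Sum>d\<in>UNIV. g x $ r $ d * pd c (\<lambda>z. zeta z $ d) x)))
      = S3 (\<lambda>r c d. christoffel g x r b m * (eta x $ c * (g x $ r $ d * pd c (\<lambda>z. zeta z $ d) x)))"
      by (simp add: S3_def sum_distrib_left)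
    also have "\<dots> = S3 (\<lambda>c d r. christoffel g x r b m * (eta x $ c * (g x $ r $ d * pd c (\<lambda>z. zeta z $ d) x)))"
      by (rule S3_p201)
    also have "\<dots> = (\<Sum>c\<in>UNIV. eta x $ c * (\<Sum>d\<in>UNIV. (\<Sum>r\<in>UNIV. christoffel g x r b m * g x $ r $ d) * pd c (\<lambda>z. zeta z $ d) x))"
      by (simp add: S3_def sum_distrib_left sum_distrib_right ac_simps)
    finally show ?thesis .
  qed
  show ?thesis
    unfolding Wf_def
    by (simp only: ring_distribs sum.distrib sum_distrib_left[symmetric] t gGamma) (simp add: algebra_simps sum.distrib sum_distrib_left add_divide_distrib diff_divide_distrib sum_subtractf sum_negf)
qed

lemma NF_eq: "nabla_form g (lie_form eta (flat g zeta)) x b m = (((((\<Sum>v95\<in>UNIV. ((((eta x $ v95) * ((\<Sum>v96\<in>UNIV. ((((g x $ m $ v96) * (pd b (pd v95 (\<lambda>y. zeta y $ v96)) x))) + (((pd b (\<lambda>y. g y $ m $ v96) x) * (pd v95 (\<lambda>y. zeta y $ v96) x))) + (((pd v95 (\<lambda>y. g y $ m $ v96) x) * (pd b (\<lambda>y. zeta y $ v96) x))) + (((pd b (pd v95 (\<lambda>y. g y $ m $ v96)) x) * (zeta x $ v96)))))))) + (((pd b (\<lambda>y. eta y $ v95) x) * ((\<Sum>v97\<in>UNIV. ((((g x $ m $ v97) * (pd v95 (\<lambda>y. zeta y $ v97) x))) + (((pd v95 (\<lambda>y. g y $ m $ v97) x) * (zeta x $ v97))))))))))) + ((\<Sum>v98\<in>UNIV.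 (((((\<Sum>v99\<in>UNIV. ((g x $ v98 $ v99) * (zeta x $ v99)))) * (pd b (pd m (\<lambda>y. eta y $ v98)) x))) + ((((\<Sum>v100\<in>UNIV. ((((g x $ v98 $ v100) * (pd b (\<lambda>y. zeta y $ v100) x))) + (((pd b (\<lambda>y. g y $ v98 $ v100) x) * (zeta x $ v100)))))) * (pd m (\<lambda>y. eta y $ v98) x)))))))) + ((- ((((\<Sum>v101\<in>UNIV. ((eta x $ v101) * ((\<Sum>v102\<in>UNIV. ((((1 / 2) * (((pd b (\<lambda>y. g y $ v102 $ m) x) + (pd m (\<lambda>y. g y $ v102 $ b) x) + ((- (pd v102 (\<lambda>y. g y $ b $ m) x))))))) * (pd v101 (\<lambda>y. zeta y $ v102) x))))))) + ((\<Sum>v103\<in>UNIV. ((christoffel g x v103 b m) * ((\<Sum>v104\<in>UNIV. ((eta x $ v104) * ((\<Sum>v105\<in>UNIV. ((pd v104 (\<lambda>y. g y $ v103 $ v105) x) * (zeta x $ v105)))))))))) + ((\<Sum>v106\<in>UNIV. ((christoffel g x v106 b m) * ((\<Sum>v107\<in>UNIV. (((\<Sum>v108\<in>UNIV. ((g x $ v107 $ v108) * (zeta x $ v108)))) * (pd v106 (\<lambda>y. eta y $ v107) x))))))))))))"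
  unfolding nabla_form_def DW_eq lf_U[OF xU] GW_eq by simp

lemma DP_eq: "pd c (\<lambda>y. lie_t2 zeta g y $ b $ m) x = (((\<Sum>v121\<in>UNIV. ((((zeta x $ v121) * (pd c (pd v121 (\<lambda>y. g y $ b $ m)) x))) + (((pd c (\<lambda>y. zeta y $ v121) x) * (pd v121 (\<lambda>y. g y $ b $ m) x)))))) + ((\<Sum>v122\<in>UNIV. ((((g x $ v122 $ m) * (pd c (pd b (\<lambda>y. zeta y $ v122)) x))) + (((pd c (\<lambda>y. g y $ v122 $ m) x) * (pd b (\<lambda>y. zeta y $ v122) x)))))) + ((\<Sum>v123\<in>UNIV. ((((g x $ b $ v123) * (pd c (pd m (\<lambda>y. zeta y $ v123)) x))) + (((pd c (\<lambda>y. g y $ b $ v123) x) * (pd m (\<lambda>y. zeta y $ v123) x)))))))"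
  unfolding lie_t2_def vec_lambda_beta
  apply (rule HD_pd)
  apply (rule HD_eq)
   apply (rule HD_sum HD_add HD_mult he[OF xU] hz[OF xU] hg[OF xU] hde hdz hdg)+
  apply (simp add: algebra_simps sum.distrib)
  done

lemma LE_eq: "lie_t2 eta (lie_t2 zeta g) x $ b $ m = (((\<Sum>v109\<in>UNIV. ((eta x $ v109) * ((((\<Sum>v110\<in>UNIV. ((((zeta x $ v110) * (pd v109 (pd v110 (\<lambda>y. g y $ b $ m)) x))) + (((pd v109 (\<lambda>y. zeta y $ v110) x) * (pd v110 (\<lambda>y. g y $ b $ m) x)))))) + ((\<Sum>v111\<in>UNIV. ((((g x $ v111 $ m) * (pd v109 (pd b (\<lambda>y. zeta y $ v111)) x))) + (((pd v109 (\<lambda>y. g y $ v111 $ m) x) * (pd b (\<lambda>y. zeta y $ v111) x)))))) + ((\<Sum>v112\<in>UNIV. ((((g x $ b $ v112) * (pd v109 (pd m (\<lambda>y. zeta y $ v112)) x))) + (((pd v109 (\<lambda>y. g y $ b $ v112) x) * (pd m (\<lambda>y. zeta y $ v112) x))))))))))) + ((\<Sum>v113\<in>UNIV. (((((\<Sum>v114\<in>UNIV. ((zeta x $ v114) * (pd v114 (\<lambda>y. g y $ v113 $ m) x)))) + ((\<Sum>v115\<in>UNIV. ((g x $ v115 $ m) * (pd v113 (\<lambda>y. zeta y $ v115) x)))) + ((\<Sum>v116\<in>UNIV. ((g x $ v113 $ v116) * (pd m (\<lambda>y. zeta y $ v116) x)))))) * (pd b (\<lambda>y. eta y $ v113) x))))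 + ((\<Sum>v117\<in>UNIV. (((((\<Sum>v118\<in>UNIV. ((zeta x $ v118) * (pd v118 (\<lambda>y. g y $ b $ v117) x)))) + ((\<Sum>v119\<in>UNIV. ((g x $ v119 $ v117) * (pd b (\<lambda>y. zeta y $ v119) x)))) + ((\<Sum>v120\<in>UNIV. ((g x $ b $ v120) * (pd v117 (\<lambda>y. zeta y $ v120) x)))))) * (pd m (\<lambda>y. eta y $ v117) x)))))"
  apply (subst lie_t2_nth)
  apply (simp only: DP_eq)
  apply (simp add: lie_t2_nth algebra_simps sum.distrib)
  done

end

lemma lie_t2_nthg: "lie_t2 X T p $ a $ b = (\<Sum>c\<in>UNIV. X p $ c * pd c (\<lambda>y. T y $ a $ b) p)
      + (\<Sum>c\<in>UNIV. T p $ c $ b * pd a (\<lambda>y. X y $ c) p)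
      + (\<Sum>c\<in>UNIV. T p $ a $ c * pd b (\<lambda>y. X y $ c) p)"
  by (simp add: lie_t2_def)

lemma lin_aux: "(X::real) - B - C = - 2 * K \<Longrightarrow> X + (D1 - B) + (D2 - C) = D1 + D2 - 2 * K"
  by linarith

context geo
begin

definition KZf :: "real^'n \<Rightarrow> 'n \<Rightarrow> real" where
  "KZf y m = (\<Sum>d\<in>UNIV. lie_t2 eta g y $ m $ d * zeta y $ d)"

lemma kz_U: "y \<in> U \<Longrightarrow> (\<Sum>c\<in>UNIV. g y $ m $ c * kzeta g eta zeta y $ c) = KZf y m"
proof -
  assume y: "y \<in> U"
  let ?Q = "\<lambda>a. \<Sum>d\<in>UNIV. lie_t2 eta g y $ a $ d * zeta y $ d"
  have "(\<Sum>c\<in>UNIV. g y $ m $ c * kzeta g eta zeta y $ c) = (\<Sum>c\<in>UNIV. g y $ m $ c * (\<Sum>a\<in>UNIV. ginv g y $ c $ a * ?Q a))"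
    unfolding kzeta_def by (simp add: sum_distrib_left mult.assoc)
  also have "\<dots> = (\<Sum>a\<in>UNIV. (\<Sum>c\<in>UNIV. g y $ m $ c * ginv g y $ c $ a) * ?Q a)"
    by (rule swap_mult2)
  also have "\<dots> = ?Q m" by (simp only: ginv_mult[OF y] delta_sum)
  finally show ?thesis unfolding KZf_def .
qed

lemma hk: "HD i (\<lambda>y. kzeta g eta zeta y $ c) x (pd i (\<lambda>y. kzeta g eta zeta y $ c) x)"
  apply (rule HDx_HD)
  apply (simp only: kzeta_def lie_t2_nthg vec_lambda_beta)
  apply (rule HDx_sum HDx_mult HDx_add hG HD_HDx[OF hg[OF xU]] HD_HDx[OF he[OF xU]] HD_HDx[OF hz[OF xU]] HD_HDx[OF hdg] HD_HDx[OF hde])+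
  done

lemma DKZ_eq: "pd b (\<lambda>y. KZf y m) x = (\<Sum>v81\<in>UNIV. (((((((\<Sum>v82\<in>UNIV. ((eta x $ v82) * (pd v82 (\<lambda>y. g y $ m $ v81) x)))) + ((\<Sum>v83\<in>UNIV. ((g x $ v83 $ v81) * (pd m (\<lambda>y. eta y $ v83) x)))) + ((\<Sum>v84\<in>UNIV. ((g x $ m $ v84) * (pd v81 (\<lambda>y. eta y $ v84) x)))))) * (pd b (\<lambda>y. zeta y $ v81) x))) + ((((((\<Sum>v85\<in>UNIV. ((((eta x $ v85) * (pd b (pd v85 (\<lambda>y. g y $ m $ v81)) x))) + (((pd b (\<lambda>y. eta y $ v85) x) * (pd v85 (\<lambda>y. g y $ m $ v81) x)))))) + ((\<Sum>v86\<in>UNIV. ((((g x $ v86 $ v81) * (pd b (pd m (\<lambda>y. eta y $ v86)) x))) + (((pd b (\<lambda>y. g y $ v86 $ v81) x) * (pd m (\<lambda>y. eta y $ v86) x)))))) + ((\<Sum>v87\<in>UNIV. ((((g x $ m $ v87) * (pd b (pd v81 (\<lambda>y. eta y $ v87)) x))) + (((pd b (\<lambda>y. g y $ m $ v87) x) * (pd v81 (\<lambda>y. eta y $ v87) x)))))))) * (zeta x $ v81)))))"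
  unfolding KZf_def lie_t2_nthg
  apply (rule HD_pd)
  apply (rule HD_eq)
   apply (rule HD_sum HD_add HD_mult he[OF xU] hz[OF xU] hg[OF xU] hde hdz hdg)+
  apply (simp add: algebra_simps sum.distrib)
  done

lemma dk: "(\<Sum>c\<in>UNIV. g x $ c $ m * pd b (\<lambda>y. kzeta g eta zeta y $ c) x) =
   pd b (\<lambda>y. KZf y m) x - (\<Sum>c\<in>UNIV. pd b (\<lambda>y. g y $ m $ c) x * kzeta g eta zeta x $ c)"
proof -
  have h: "HD b (\<lambda>y. \<Sum>c\<in>UNIV. g y $ m $ c * kzeta g eta zeta y $ c) x
     (\<Sum>c\<in>UNIV. g x $ m $ c * pd b (\<lambda>y. kzeta g eta zeta y $ c) x + pd b (\<lambda>y. g y $ m $ c) x * kzeta g eta zeta x $ c)"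
    by (rule HD_sum, rule HD_mult, rule hg[OF xU], rule hk)
  have "pd b (\<lambda>y. \<Sum>c\<in>UNIV. g y $ m $ c * kzeta g eta zeta y $ c) x = pd b (\<lambda>y. KZf y m) x"
    by (rule pd_local[OF oU xU]) (rule kz_U)
  then show ?thesis using HD_pd[OF h] by (simp add: sum.distrib gsym[OF xU, of c m for c])
qed

lemma kGl: "(\<Sum>c\<in>UNIV. kzeta g eta zeta x $ c * ((pd b (\<lambda>y. g y $ c $ m) x + pd m (\<lambda>y. g y $ c $ b) x - pd c (\<lambda>y. g y $ b $ m) x) / 2))
   = (\<Sum>a\<in>UNIV. (\<Sum>d\<in>UNIV. lie_t2 eta g x $ a $ d * zeta x $ d) * christoffel g x a b m)"
proof -
  let ?Q = "\<lambda>a. \<Sum>d\<in>UNIV. lie_t2 eta g x $ a $ d * zeta x $ d"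
  let ?X = "\<lambda>c. (pd b (\<lambda>y. g y $ c $ m) x + pd m (\<lambda>y. g y $ c $ b) x - pd c (\<lambda>y. g y $ b $ m) x) / 2"
  have k: "\<And>c. kzeta g eta zeta x $ c = (\<Sum>a\<in>UNIV. ginv g x $ c $ a * ?Q a)"
    unfolding kzeta_def by (simp add: sum_distrib_left mult.assoc)
  have ch: "\<And>a. christoffel g x a b m = (\<Sum>c\<in>UNIV. ginv g x $ c $ a * ?X c)"
    unfolding christoffel_def by (simp add: sum_divide_distrib ginv_sym)
  have "(\<Sum>c\<in>UNIV. kzeta g eta zeta x $ c * ?X c) = (\<Sum>c\<in>UNIV. (\<Sum>a\<in>UNIV. ginv g x $ c $ a * ?Q a) * ?X c)"
    by (simp only: k)
  also have "\<dots> = (\<Sum>a\<in>UNIV. ?Q a * (\<Sum>c\<in>UNIV. ginv g x $ c $ a * ?X c))"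
    unfolding sum_distrib_left sum_distrib_right by (subst sum.swap) (simp add: ac_simps)
  also have "\<dots> = (\<Sum>a\<in>UNIV. ?Q a * christoffel g x a b m)" by (simp only: ch)
  finally show ?thesis .
qed

lemma KZG_eq: "(\<Sum>a\<in>UNIV. (\<Sum>d\<in>UNIV. lie_t2 eta g x $ a $ d * zeta x $ d) * christoffel g x a b m) = (((\<Sum>v95\<in>UNIV. (((\<Sum>v96\<in>UNIV. (((((\<Sum>v97\<in>UNIV. ((eta x $ v97) * (pd v97 (\<lambda>y. g y $ v95 $ v96) x)))) + ((\<Sum>v98\<in>UNIV. ((g x $ v98 $ v96) * (pd v95 (\<lambda>y. eta y $ v98) x)))))) * (zeta x $ v96)))) * (christoffel g x v95 b m)))) + ((\<Sum>v99\<in>UNIV. (\<Sum>v100\<in>UNIV. ((((1 / 2) * (((pd b (\<lambda>y. g y $ v100 $ m) x) + (pd m (\<lambda>y. g y $ v100 $ b) x) + ((- (pd v100 (\<lambda>y. g y $ b $ m) x))))))) * (pd v99 (\<lambda>y. eta y $ v100) x) * (zeta x $ v99))))))"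
proof -
  have t: "(\<Sum>a\<in>UNIV. (\<Sum>d\<in>UNIV. (\<Sum>c\<in>UNIV. g x $ a $ c * pd d (\<lambda>y. eta y $ c) x) * zeta x $ d) * christoffel g x a b m)
     = (\<Sum>d\<in>UNIV. \<Sum>c\<in>UNIV. (\<Sum>a\<in>UNIV. christoffel g x a b m * g x $ a $ c) * pd d (\<lambda>y. eta y $ c) x * zeta x $ d)"
  proof -
    have "(\<Sum>a\<in>UNIV. (\<Sum>d\<in>UNIV. (\<Sum>c\<in>UNIV. g x $ a $ c * pd d (\<lambda>y. eta y $ c) x) * zeta x $ d) * christoffel g x a b m)
      = S3 (\<lambda>a d c. g x $ a $ c * pd d (\<lambda>y. eta y $ c) x * zeta x $ d * christoffel g x a b m)"
      by (simp add: S3_def sum_distrib_right)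
    also have "\<dots> = S3 (\<lambda>d c a. g x $ a $ c * pd d (\<lambda>y. eta y $ c) x * zeta x $ d * christoffel g x a b m)"
      by (rule S3_p201)
    also have "\<dots> = (\<Sum>d\<in>UNIV. \<Sum>c\<in>UNIV. (\<Sum>a\<in>UNIV. christoffel g x a b m * g x $ a $ c) * pd d (\<lambda>y. eta y $ c) x * zeta x $ d)"
      by (simp add: S3_def sum_distrib_left sum_distrib_right ac_simps)
    finally show ?thesis .
  qed
  show ?thesis
    unfolding lie_t2_nth
    by (simp only: ring_distribs sum.distrib t gGamma) (simp add: algebra_simps sum.distrib sum_distrib_left sum_distrib_right add_divide_distrib diff_divide_distrib sum_subtractf sum_negf)
qed

lemma DK_eq: "pd c (\<lambda>y. lie_t2 eta g y $ b $ m) x = (((\<Sum>v113\<in>UNIV. ((((eta x $ v113) * (pd c (pd v113 (\<lambda>y. g y $ b $ m)) x))) + (((pd c (\<lambda>y. eta y $ v113) x) * (pd v113 (\<lambda>y. g y $ b $ m) x)))))) + ((\<Sum>v114\<in>UNIV. ((((g x $ v114 $ m) * (pd c (pd b (\<lambda>y. eta y $ v114)) x))) + (((pd c (\<lambda>y. g y $ v114 $ m) x) * (pd b (\<lambda>y. eta y $ v114) x)))))) + ((\<Sum>v115\<in>UNIV. ((((g x $ b $ v115) * (pd c (pd m (\<lambda>y. eta y $ v115)) x))) + (((pd c (\<lambda>y. g y $ b $ v115) x) * (pd m (\<lambda>y. eta y $ v115) x)))))))"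
  unfolding lie_t2_nthg
  apply (rule HD_pd)
  apply (rule HD_eq)
   apply (rule HD_sum HD_add HD_mult he[OF xU] hz[OF xU] hg[OF xU] hde hdz hdg)+
  apply (simp add: algebra_simps sum.distrib)
  done

lemma LK_eq: "lie_t2 zeta (lie_t2 eta g) x $ b $ m = (((\<Sum>v101\<in>UNIV. ((zeta x $ v101) * ((((\<Sum>v102\<in>UNIV. ((((eta x $ v102) * (pd v101 (pd v102 (\<lambda>y. g y $ b $ m)) x))) + (((pd v101 (\<lambda>y. eta y $ v102) x) * (pd v102 (\<lambda>y. g y $ b $ m) x)))))) + ((\<Sum>v103\<in>UNIV. ((((g x $ v103 $ m) * (pd v101 (pd b (\<lambda>y. eta y $ v103)) x))) + (((pd v101 (\<lambda>y. g y $ v103 $ m) x) * (pd b (\<lambda>y. eta y $ v103) x)))))) + ((\<Sum>v104\<in>UNIV. ((((g x $ b $ v104) * (pd v101 (pd m (\<lambda>y. eta y $ v104)) x))) + (((pd v101 (\<lambda>y. g y $ b $ v104) x) * (pd m (\<lambda>y. eta y $ v104) x))))))))))) + ((\<Sum>v105\<in>UNIV. (((((\<Sum>v106\<in>UNIV. ((eta x $ v106) * (pd v106 (\<lambda>y. g y $ v105 $ m) x)))) + ((\<Sum>v107\<in>UNIV. ((g x $ v107 $ m) * (pd v105 (\<lambda>y. eta y $ v107) x)))) + ((\<Sum>v108\<in>UNIV. ((g x $ v105 $ v108) * (pd m (\<lambda>y. eta y $ v108) x)))))) * (pd b (\<lambda>y. zeta y $ v105) x)))) + ((\<Sum>v109\<in>UNIV.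 (((((\<Sum>v110\<in>UNIV. ((eta x $ v110) * (pd v110 (\<lambda>y. g y $ b $ v109) x)))) + ((\<Sum>v111\<in>UNIV. ((g x $ v111 $ v109) * (pd b (\<lambda>y. eta y $ v111) x)))) + ((\<Sum>v112\<in>UNIV. ((g x $ b $ v112) * (pd v109 (\<lambda>y. eta y $ v112) x)))))) * (pd m (\<lambda>y. zeta y $ v109) x)))))"
  apply (subst lie_t2_nth)
  apply (simp only: DK_eq)
  apply (simp add: lie_t2_nth algebra_simps sum.distrib)
  done

lemma Lk_eq: "lie_t2 (kzeta g eta zeta) g x $ b $ m = (\<Sum>v81\<in>UNIV. (((((((\<Sum>v82\<in>UNIV. ((eta x $ v82) * (pd v82 (\<lambda>y. g y $ m $ v81) x)))) + ((\<Sum>v83\<in>UNIV. ((g x $ v83 $ v81) * (pd m (\<lambda>y. eta y $ v83) x)))) + ((\<Sum>v84\<in>UNIV. ((g x $ m $ v84) * (pd v81 (\<lambda>y. eta y $ v84) x)))))) * (pd b (\<lambda>y. zeta y $ v81) x))) + ((((((\<Sum>v85\<in>UNIV. ((((eta x $ v85) * (pd b (pd v85 (\<lambda>y. g y $ m $ v81)) x))) + (((pd b (\<lambda>y. eta y $ v85) x) * (pd v85 (\<lambda>y. g y $ m $ v81) x)))))) + ((\<Sum>v86\<in>UNIV. ((((g x $ v86 $ v81) * (pd b (pd m (\<lambda>y. eta y $ v86)) x))) + (((pd b (\<lambda>y. g y $ v86 $ v81) x) * (pd m (\<lambda>y. eta y $ v86) x)))))) + ((\<Sum>v87\<in>UNIV.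 ((((g x $ m $ v87) * (pd b (pd v81 (\<lambda>y. eta y $ v87)) x))) + (((pd b (\<lambda>y. g y $ m $ v87) x) * (pd v81 (\<lambda>y. eta y $ v87) x)))))))) * (zeta x $ v81))))) + (\<Sum>v88\<in>UNIV. (((((((\<Sum>v89\<in>UNIV. ((eta x $ v89) * (pd v89 (\<lambda>y. g y $ b $ v88) x)))) + ((\<Sum>v90\<in>UNIV. ((g x $ v90 $ v88) * (pd b (\<lambda>y. eta y $ v90) x)))) + ((\<Sum>v91\<in>UNIV. ((g x $ b $ v91) * (pd v88 (\<lambda>y. eta y $ v91) x)))))) * (pd m (\<lambda>y. zeta y $ v88) x))) + ((((((\<Sum>v92\<in>UNIV. ((((eta x $ v92) * (pd m (pd v92 (\<lambda>y. g y $ b $ v88)) x))) + (((pd m (\<lambda>y. eta y $ v92) x) * (pd v92 (\<lambda>y. g y $ b $ v88) x)))))) + ((\<Sum>v93\<in>UNIV. ((((g x $ v93 $ v88) * (pd m (pd b (\<lambda>y. eta y $ v93)) x))) + (((pd m (\<lambda>y. g y $ v93 $ v88) x) * (pd b (\<lambda>y. eta y $ v93) x)))))) + ((\<Sum>v94\<in>UNIV. ((((g x $ b $ v94) * (pd m (pd v88 (\<lambda>y. eta y $ v94)) x))) + (((pd m (\<lambda>y. g y $ b $ v94) x) * (pd v88 (\<lambda>y. eta y $ v94) x)))))))) * (zeta x $ v88))))) - 2 * (((\<Sum>v95\<in>UNIV. (((\<Sum>v96\<in>UNIV. (((((\<Sum>v97\<in>UNIV. ((eta x $ v97) * (pd v97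 (\<lambda>y. g y $ v95 $ v96) x)))) + ((\<Sum>v98\<in>UNIV. ((g x $ v98 $ v96) * (pd v95 (\<lambda>y. eta y $ v98) x)))))) * (zeta x $ v96)))) * (christoffel g x v95 b m)))) + ((\<Sum>v99\<in>UNIV. (\<Sum>v100\<in>UNIV. ((((1 / 2) * (((pd b (\<lambda>y. g y $ v100 $ m) x) + (pd m (\<lambda>y. g y $ v100 $ b) x) + ((- (pd v100 (\<lambda>y. g y $ b $ m) x))))))) * (pd v99 (\<lambda>y. eta y $ v100) x) * (zeta x $ v99))))))"
proof -
  have d1: "(\<Sum>c\<in>UNIV. g x $ c $ m * pd b (\<lambda>y. kzeta g eta zeta y $ c) x) =
     (\<Sum>v81\<in>UNIV. (((((((\<Sum>v82\<in>UNIV. ((eta x $ v82) * (pd v82 (\<lambda>y. g y $ m $ v81) x)))) + ((\<Sum>v83\<in>UNIV. ((g x $ v83 $ v81) * (pd m (\<lambda>y. eta y $ v83) x)))) + ((\<Sum>v84\<in>UNIV. ((g x $ m $ v84) * (pd v81 (\<lambda>y. eta y $ v84) x)))))) * (pd b (\<lambda>y. zeta y $ v81) x))) + ((((((\<Sum>v85\<in>UNIV. ((((eta x $ v85) * (pd b (pd v85 (\<lambda>y. g y $ m $ v81)) x))) + (((pd b (\<lambda>y. eta y $ v85) x) * (pd v85 (\<lambda>y. g y $ m $ v81) x)))))) + ((\<Sum>v86\<in>UNIV. ((((g x $ v86 $ v81) * (pd b (pd m (\<lambda>y. eta y $ v86)) x))) + (((pd b (\<lambda>y. g y $ v86 $ v81)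 x) * (pd m (\<lambda>y. eta y $ v86) x)))))) + ((\<Sum>v87\<in>UNIV. ((((g x $ m $ v87) * (pd b (pd v81 (\<lambda>y. eta y $ v87)) x))) + (((pd b (\<lambda>y. g y $ m $ v87) x) * (pd v81 (\<lambda>y. eta y $ v87) x)))))))) * (zeta x $ v81))))) - (\<Sum>c\<in>UNIV. pd b (\<lambda>y. g y $ c $ m) x * kzeta g eta zeta x $ c)"
    using dk[of m b] by (simp add: DKZ_eq dgs[of b m])
  have d2: "(\<Sum>c\<in>UNIV. g x $ b $ c * pd m (\<lambda>y. kzeta g eta zeta y $ c) x) =
     (\<Sum>v88\<in>UNIV. (((((((\<Sum>v89\<in>UNIV. ((eta x $ v89) * (pd v89 (\<lambda>y. g y $ b $ v88) x)))) + ((\<Sum>v90\<in>UNIV. ((g x $ v90 $ v88) * (pd b (\<lambda>y. eta y $ v90) x)))) + ((\<Sum>v91\<in>UNIV. ((g x $ b $ v91) * (pd v88 (\<lambda>y. eta y $ v91) x)))))) * (pd m (\<lambda>y. zeta y $ v88) x))) + ((((((\<Sum>v92\<in>UNIV. ((((eta x $ v92) * (pd m (pd v92 (\<lambda>y. g y $ b $ v88)) x))) + (((pd m (\<lambda>y. eta y $ v92) x) * (pd v92 (\<lambda>y. g y $ b $ v88) x)))))) + ((\<Sum>v93\<in>UNIV. ((((g x $ v93 $ v88) * (pd m (pd b (\<lambda>y. eta y $ v93)) x))) + (((pd m (\<lambda>y. g y $ v93 $ v88) x) * (pd b (\<lambda>y. eta y $ v93) x)))))) + ((\<Sum>v94\<in>UNIV.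 ((((g x $ b $ v94) * (pd m (pd v88 (\<lambda>y. eta y $ v94)) x))) + (((pd m (\<lambda>y. g y $ b $ v94) x) * (pd v88 (\<lambda>y. eta y $ v94) x)))))))) * (zeta x $ v88))))) - (\<Sum>c\<in>UNIV. pd m (\<lambda>y. g y $ c $ b) x * kzeta g eta zeta x $ c)"
    using dk[of b m] by (simp add: DKZ_eq dgs[of m b] gsym[OF xU, of b])
  have e: "(\<Sum>c\<in>UNIV. kzeta g eta zeta x $ c * pd c (\<lambda>y. g y $ b $ m) x)
     - (\<Sum>c\<in>UNIV. pd b (\<lambda>y. g y $ c $ m) x * kzeta g eta zeta x $ c)
     - (\<Sum>c\<in>UNIV. pd m (\<lambda>y. g y $ c $ b) x * kzeta g eta zeta x $ c)
     = - 2 * (\<Sum>c\<in>UNIV. kzeta g eta zeta x $ c * ((pd b (\<lambda>y. g y $ c $ m) x + pd m (\<lambda>y. g y $ c $ b) x - pd c (\<lambda>y. g y $ b $ m) x) / 2))"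
  proof -
    have p: "\<And>c. - 2 * (kzeta g eta zeta x $ c * ((pd b (\<lambda>y. g y $ c $ m) x + pd m (\<lambda>y. g y $ c $ b) x - pd c (\<lambda>y. g y $ b $ m) x) / 2))
       = kzeta g eta zeta x $ c * pd c (\<lambda>y. g y $ b $ m) x - pd b (\<lambda>y. g y $ c $ m) x * kzeta g eta zeta x $ c - pd m (\<lambda>y. g y $ c $ b) x * kzeta g eta zeta x $ c"
      by (simp add: field_simps)
    show ?thesis unfolding sum_distrib_left p by (simp add: sum_subtractf)
  qed
  note e2 = e[unfolded kGl KZG_eq]
  show ?thesis
    apply (subst lie_t2_nth)
    apply (simp only: d1 d2)
    apply (rule lin_aux)
    apply (rule e2)
    done
qed

end

lemma lin2: "(L::real) = ((1 / 2) * A) + ((1 / 2) * B) + (- (1 / 2) * C) \<Longrightarrow> L = (A + B) / 2 - C / 2"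
  by (simp add: field_simps)

lemma lin3: "(L::real) = ((1 / 2) * A) + ((1 / 2) * B) + (- K) + (- (1 / 2) * C) \<Longrightarrow> L = (A + B - 2 * K) / 2 - C / 2"
  by (simp add: field_simps)

theorem lemma3p2:
  fixes U :: "(real^'n::finite) set" and g :: "'n tens2" and eta zeta :: "'n vfield"
  assumes "semi_riemannian U g"
    and "smooth_vf U eta" and "smooth_vf U zeta"
    and "x \<in> U"
  shows "((\<Sum>a\<in>UNIV. zeta x $ a * Sigma_low g eta x a b m) =
           (nabla_form g (lie_form eta (flat g zeta)) x b m
            + nabla_form g (lie_form eta (flat g zeta)) x m b) / 2
           - lie_t2 eta (lie_t2 zeta g) x $ b $ m / 2)
         \<and> ((\<Sum>a\<in>UNIV. zeta x $ a * Sigma_low g eta x a b m) =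
           lie_t2 (kzeta g eta zeta) g x $ b $ m / 2
           - lie_t2 zeta (lie_t2 eta g) x $ b $ m / 2)"
proof -
  interpret geo U g eta zeta x using assms by unfold_locales
  have gs: "\<And>i j. g x $ i $ j = g x $ j $ i" by (rule gsym[OF xU])
  note A1 = alg1[where gg="\<lambda>i j. g x $ i $ j" and dg="\<lambda>c i j. pd c (\<lambda>y. g y $ i $ j) x"
      and ddg="\<lambda>c d i j. pd c (pd d (\<lambda>y. g y $ i $ j)) x" and e="\<lambda>k. eta x $ k" and z="\<lambda>k. zeta x $ k"
      and de="\<lambda>k i. pd i (\<lambda>y. eta y $ k) x" and dz="\<lambda>k i. pd i (\<lambda>y. zeta y $ k) x"
      and dde="\<lambda>k i j. pd i (pd j (\<lambda>y. eta y $ k)) x" and ddz="\<lambda>k i j. pd i (pd j (\<lambda>y. zeta y $ k)) x"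
      and Gu="\<lambda>k i j. christoffel g x k i j" and b=b and m=m, OF gs dgs ddgs1 ddgs2 ddes ddzs Gus]
  note A2 = alg2[where gg="\<lambda>i j. g x $ i $ j" and dg="\<lambda>c i j. pd c (\<lambda>y. g y $ i $ j) x"
      and ddg="\<lambda>c d i j. pd c (pd d (\<lambda>y. g y $ i $ j)) x" and e="\<lambda>k. eta x $ k" and z="\<lambda>k. zeta x $ k"
      and de="\<lambda>k i. pd i (\<lambda>y. eta y $ k) x" and dz="\<lambda>k i. pd i (\<lambda>y. zeta y $ k) x"
      and dde="\<lambda>k i j. pd i (pd j (\<lambda>y. eta y $ k)) x" and ddz="\<lambda>k i j. pd i (pd j (\<lambda>y. zeta y $ k)) x"
      and Gu="\<lambda>k i j. christoffel g x k i j" and b=b and m=m, OF gs dgs ddgs1 ddgs2 ddes ddzs Gus]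
  show ?thesis
  proof
    show "(\<Sum>a\<in>UNIV. zeta x $ a * Sigma_low g eta x a b m) =
           (nabla_form g (lie_form eta (flat g zeta)) x b m
            + nabla_form g (lie_form eta (flat g zeta)) x m b) / 2
           - lie_t2 eta (lie_t2 zeta g) x $ b $ m / 2"
      unfolding Sigma_low_eq NF_eq LE_eq by (rule lin2[OF A1])
    show "(\<Sum>a\<in>UNIV. zeta x $ a * Sigma_low g eta x a b m) =
           lie_t2 (kzeta g eta zeta) g x $ b $ m / 2
           - lie_t2 zeta (lie_t2 eta g) x $ b $ m / 2"
      unfolding Sigma_low_eq Lk_eq LK_eq by (rule lin3[OF A2])
  qed
qed

end
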